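(* Let $b\ge a\ge 0$. There is a bijection $$\theta:\{\pi\in\mathcal I_{a+b}(321):\mathrm{fp}(\pi)\ge b-a\}\longrightarrow\mathcal Y_{a,b}$$ such that whenever $\theta(\pi)=\lambda$, one has $\mathrm{Des}(\pi)=\mathrm{hd}(\lambda)$.
   Context: $\mathcal I_m(321)$ is the set of involutions in $\mathcal S_m$ avoiding the pattern $321$. $\mathrm{fp}(\pi)$ is the number of fixed points of $\pi$. $\mathrm{Des}(\pi)$ is the set of positions $i$ with $\pi(i)>\pi(i+1)$. $\mathcal Y_{a,b}$ is the set of Young diagrams (partitions) fitting inside an $a\times b$ rectangle ($a$ rows, $b$ columns). For a diagram $\lambda$ with conjugate $\lambda'$ and Durfee square of side $d$ (largest $d$ with $\lambda_d\ge d$), the hook decomposition is $\mathrm{hd}(\lambda)=\{\lambda_i+\lambda'_i-2i+1:1\le i\le d\}$, the sizes of the hooks obtained by successively removing the first row and first column. *)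

theory Defs
  imports "HOL-Combinatorics.Permutations"
begin

text \<open>Permutations of [m] = {1..m}, as functions nat => nat fixing everything outside {1..m}.\<close>

definition avoids321 :: "(nat \<Rightarrow> nat) \<Rightarrow> nat \<Rightarrow> bool" where
  "avoids321 p m \<longleftrightarrow>
     \<not> (\<exists>i j k. 1 \<le> i \<and> i < j \<and> j < k \<and> k \<le> m \<and> p i > p j \<and> p j > p k)"

definition inv321 :: "nat \<Rightarrow> (nat \<Rightarrow> nat) set" where
  "inv321 m = {p. p permutes {1..m} \<and> p \<circ> p = id \<and> avoids321 p m}"

definition fp :: "nat \<Rightarrow> (nat \<Rightarrow> nat) \<Rightarrow> nat" where
  "fp m p = card {i \<in> {1..m}. p i = i}"

definition Des :: "nat \<Rightarrow> (nat \<Rightarrow> nat) \<Rightarrow> nat set" where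
  "Des m p = {i. 1 \<le> i \<and> i < m \<and> p i > p (i + 1)}"

text \<open>Young diagrams in an a x b box: lam i is the length of row i (rows 1..a),
  weakly decreasing, at most b, and lam i = 0 for i = 0 or i > a.\<close>

definition young :: "nat \<Rightarrow> nat \<Rightarrow> (nat \<Rightarrow> nat) set" where
  "young a b = {lam. (\<forall>i. lam i \<le> b) \<and> (\<forall>i j. 1 \<le> i \<longrightarrow> i \<le> j \<longrightarrow> lam j \<le> lam i)
                    \<and> (\<forall>i. (i = 0 \<or> i > a) \<longrightarrow> lam i = 0)}"

definition conjugate :: "(nat \<Rightarrow> nat) \<Rightarrow> nat \<Rightarrow> nat" where
  "conjugate lam j = card {i. 1 \<le> i \<and> j \<le> lam i}"

definition durfee :: "(nat \<Rightarrow> nat) \<Rightarrow> nat" where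
  "durfee lam = (GREATEST d. d \<le> lam d)"

definition hookdec :: "(nat \<Rightarrow> nat) \<Rightarrow> nat set" where
  "hookdec lam = {lam i + conjugate lam i + 1 - 2 * i | i. 1 \<le> i \<and> i \<le> durfee lam}"


end

theory Submission
  imports Defs
begin

definition rkb :: "nat set \<Rightarrow> nat \<Rightarrow> nat" where
  "rkb S x = card {y \<in> S. y \<le> x}"
definition rkt :: "nat set \<Rightarrow> nat \<Rightarrow> nat" where
  "rkt S x = card {y \<in> S. x \<le> y}"

lemma rkb_less:
  assumes "finite S" "x < x'" "x' \<in> S"
  shows "rkb S x < rkb S x'"
proof -
  have "{y \<in> S. y \<le> x} \<subset> {y \<in> S. y \<le> x'}"
  proof
    show "{y \<in> S. y \<le> x} \<subseteq> {y \<in> S. y \<le> x'}" using assms by auto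
    show "{y \<in> S. y \<le> x} \<noteq> {y \<in> S. y \<le> x'}" using assms by (metis (mono_tags, lifting) mem_Collect_eq not_le order_refl)
  qed
  then show ?thesis unfolding rkb_def using assms by (intro psubset_card_mono) auto
qed

lemma rkt_less:
  assumes "finite S" "x < x'" "x \<in> S"
  shows "rkt S x' < rkt S x"
proof -
  have "{y \<in> S. x' \<le> y} \<subset> {y \<in> S. x \<le> y}"
  proof
    show "{y \<in> S. x' \<le> y} \<subseteq> {y \<in> S. x \<le> y}" using assms by auto
    show "{y \<in> S. x' \<le> y} \<noteq> {y \<in> S. x \<le> y}" using assms by (metis (mono_tags, lifting) mem_Collect_eq not_le order_refl)
  qed
  then show ?thesis unfolding rkt_def using assms by (intro psubset_card_mono) auto
qed

lemma rkb_le_iff: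
  assumes "finite S" "x \<in> S" "x' \<in> S"
  shows "rkb S x \<le> rkb S x' \<longleftrightarrow> x \<le> x'"
proof
  assume h: "rkb S x \<le> rkb S x'"
  show "x \<le> x'"
  proof (rule ccontr)
    assume "\<not> x \<le> x'"
    then have "x' < x" by simp
    from rkb_less[OF assms(1) this assms(2)] h show False by simp
  qed
next
  assume "x \<le> x'"
  then show "rkb S x \<le> rkb S x'" unfolding rkb_def using assms(1) by (intro card_mono) auto
qed

lemma rkt_le_iff:
  assumes "finite S" "x \<in> S" "x' \<in> S"
  shows "rkt S x \<le> rkt S x' \<longleftrightarrow> x' \<le> x"
proof
  assume h: "rkt S x \<le> rkt S x'"
  show "x' \<le> x"
  proof (rule ccontr)
    assume "\<not> x' \<le> x"
    then have "x < x'" by simp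
    from rkt_less[OF assms(1) this assms(2)] h show False by simp
  qed
next
  assume "x' \<le> x"
  then show "rkt S x \<le> rkt S x'" unfolding rkt_def using assms(1) by (intro card_mono) auto
qed

lemma rkb_bij:
  assumes "finite S"
  shows "bij_betw (rkb S) S {1..card S}"
proof -
  have inj: "inj_on (rkb S) S"
    by (intro inj_onI) (metis assms rkb_le_iff order_antisym order_refl)
  have sub: "rkb S ` S \<subseteq> {1..card S}"
  proof
    fix t assume "t \<in> rkb S ` S"
    then obtain x where x: "x \<in> S" "t = rkb S x" by auto
    have "x \<in> {y \<in> S. y \<le> x}" using x by auto
    then have "{y \<in> S. y \<le> x} \<noteq> {}" by blast
    then have "0 < t" unfolding x rkb_def using assms by (simp add: card_gt_0_iff)
    then have "1 \<le> t" by simp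
    moreover have "t \<le> card S" unfolding x rkb_def using assms by (intro card_mono) auto
    ultimately show "t \<in> {1..card S}" by auto
  qed
  have "card (rkb S ` S) = card {1..card S}" using inj by (simp add: card_image)
  then have "rkb S ` S = {1..card S}" using sub by (intro card_subset_eq) auto
  then show ?thesis using inj by (simp add: bij_betw_def)
qed

lemma rkt_bij:
  assumes "finite S"
  shows "bij_betw (rkt S) S {1..card S}"
proof -
  have inj: "inj_on (rkt S) S"
    by (intro inj_onI) (metis assms rkt_le_iff order_antisym order_refl)
  have sub: "rkt S ` S \<subseteq> {1..card S}"
  proof
    fix t assume "t \<in> rkt S ` S"
    then obtain x where x: "x \<in> S" "t = rkt S x" by auto
    have "x \<in> {y \<in> S. x \<le> y}" using x by auto
    then have "{y \<in> S. x \<le> y} \<noteq> {}" by blast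
    then have "0 < t" unfolding x rkt_def using assms by (simp add: card_gt_0_iff)
    then have "1 \<le> t" by simp
    moreover have "t \<le> card S" unfolding x rkt_def using assms by (intro card_mono) auto
    ultimately show "t \<in> {1..card S}" by auto
  qed
  have "card (rkt S ` S) = card {1..card S}" using inj by (simp add: card_image)
  then have "rkt S ` S = {1..card S}" using sub by (intro card_subset_eq) auto
  then show ?thesis using inj by (simp add: bij_betw_def)
qed

lemma dc_interval:
  assumes "finite S" "\<And>c. c \<in> S \<Longrightarrow> 1 \<le> c" "\<And>c. Suc c \<in> S \<Longrightarrow> 1 \<le> c \<Longrightarrow> c \<in> S"
  shows "S = {1..card S}"
proof (cases "S = {}")
  case True then show ?thesis by simp
next
  case False
  define m where "m = Max S"
  have mS: "m \<in> S" using False assms(1) m_def by simp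
  have A: "\<forall>c. 1 \<le> c \<longrightarrow> c \<le> m \<longrightarrow> c \<in> S"
  proof (intro allI impI)
    fix c assume c: "1 \<le> c" "c \<le> m"
    show "c \<in> S" using c
    proof (induction "m - c" arbitrary: c)
      case 0 then have "c = m" by simp
      then show ?case using mS by simp
    next
      case (Suc k)
      then have "k = m - Suc c" "1 \<le> Suc c" "Suc c \<le> m" by auto
      then have "Suc c \<in> S" using Suc.hyps(1) by blast
      then show ?case using assms(3) Suc.prems by auto
    qed
  qed
  have B: "\<forall>c\<in>S. c \<le> m" using assms(1) m_def by simp
  have "S = {1..m}"
  proof (intro equalityI subsetI)
    fix c assume "c \<in> S" then show "c \<in> {1..m}" using B assms(2) by force
  next
    fix c assume "c \<in> {1..m}" then show "c \<in> S" using A by force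
  qed
  then show ?thesis by simp
qed

lemma card_le_iff_mem:
  assumes "finite S" "\<And>c. c \<in> S \<Longrightarrow> 1 \<le> c" "\<And>c. Suc c \<in> S \<Longrightarrow> 1 \<le> c \<Longrightarrow> c \<in> S" "1 \<le> r"
  shows "r \<le> card S \<longleftrightarrow> r \<in> S"
proof -
  have e: "S = {1..card S}" by (rule dc_interval[OF assms(1-3)])
  have "r \<in> S \<longleftrightarrow> r \<in> {1..card S}" by (subst e) (rule refl)
  then show ?thesis using assms(4) by simp
qed


definition cnt :: "nat set \<Rightarrow> nat \<Rightarrow> nat" where
  "cnt A x = card {y \<in> A. x \<le> y}"

definition cellF :: "nat set \<Rightarrow> nat set \<Rightarrow> nat \<Rightarrow> nat \<Rightarrow> bool" where
  "cellF A B r c \<longleftrightarrow> 1 \<le> r \<and> 1 \<le> c \<and>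
     ((r \<le> c \<and> r \<le> cnt A (c - r)) \<or> (c < r \<and> c \<le> cnt B (r - c)))"

definition frob :: "nat set \<Rightarrow> nat set \<Rightarrow> nat \<Rightarrow> nat" where
  "frob A B r = card {c. cellF A B r c}"

definition pairs :: "nat \<Rightarrow> nat \<Rightarrow> (nat set \<times> nat set) set" where
  "pairs a b = {(A, B). A \<subseteq> {..<b} \<and> B \<subseteq> {..<a} \<and> card A = card B}"

definition NA :: "nat set \<Rightarrow> nat \<Rightarrow> nat" where
  "NA A i = card {x. i \<le> cnt A x}"

lemma cnt_mono: "finite A \<Longrightarrow> x \<le> y \<Longrightarrow> cnt A y \<le> cnt A x"
  unfolding cnt_def by (intro card_mono) auto

lemma cnt_Suc: "finite A \<Longrightarrow> cnt A x \<le> Suc (cnt A (Suc x))"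
proof -
  assume f: "finite A"
  have "{y \<in> A. x \<le> y} \<subseteq> insert x {y \<in> A. Suc x \<le> y}" by auto
  then have "card {y \<in> A. x \<le> y} \<le> card (insert x {y \<in> A. Suc x \<le> y})"
    using f by (intro card_mono) auto
  also have "\<dots> \<le> Suc (card {y \<in> A. Suc x \<le> y})" by (rule card_insert_le_m1) simp_all
  finally show ?thesis unfolding cnt_def .
qed

lemma cnt_0: "cnt A 0 = card A"
  unfolding cnt_def by simp

lemma cnt_le_card: "finite A \<Longrightarrow> cnt A x \<le> card A"
  unfolding cnt_def by (intro card_mono) auto

lemma cnt_ge: "finite A \<Longrightarrow> card A \<le> cnt A x + x"
proof -
  assume f: "finite A"
  have "A \<subseteq> {y \<in> A. x \<le> y} \<union> {..<x}" by auto
  then have "card A \<le> card ({y \<in> A. x \<le> y} \<union> {..<x})" using f by (intro card_mono) auto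
  also have "\<dots> \<le> card {y \<in> A. x \<le> y} + card {..<x}" by (rule card_Un_le)
  finally show ?thesis unfolding cnt_def by simp
qed

lemma cnt_le_bound: "A \<subseteq> {..<b} \<Longrightarrow> cnt A x + x \<le> max b x"
proof -
  assume A: "A \<subseteq> {..<b}"
  have "{y \<in> A. x \<le> y} \<subseteq> {x..<b}" using A by auto
  then have "cnt A x \<le> card {x..<b}" unfolding cnt_def by (intro card_mono) auto
  then show ?thesis by simp
qed

lemma card_bound: "A \<subseteq> {..<b} \<Longrightarrow> card A \<le> b"
  using card_mono[of "{..<b}" A] by simp

lemma cnt_Suc_less: "finite A \<Longrightarrow> x \<in> A \<longleftrightarrow> cnt A (Suc x) < cnt A x"
proof -
  assume f: "finite A"
  show ?thesis
  proof
    assume "x \<in> A"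
    then have "x \<in> {y \<in> A. x \<le> y}" "x \<notin> {y \<in> A. Suc x \<le> y}" by auto
    then have "{y \<in> A. Suc x \<le> y} \<noteq> {y \<in> A. x \<le> y}" by blast
    moreover have "{y \<in> A. Suc x \<le> y} \<subseteq> {y \<in> A. x \<le> y}" by auto
    ultimately have "{y \<in> A. Suc x \<le> y} \<subset> {y \<in> A. x \<le> y}" by (simp add: psubset_eq)
    then show "cnt A (Suc x) < cnt A x" unfolding cnt_def using f by (intro psubset_card_mono) auto
  next
    assume h: "cnt A (Suc x) < cnt A x"
    show "x \<in> A"
    proof (rule ccontr)
      assume "x \<notin> A"
      then have "{y \<in> A. Suc x \<le> y} = {y \<in> A. x \<le> y}" by (auto simp: Suc_le_eq le_less)
      then show False using h unfolding cnt_def by simp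
    qed
  qed
qed

lemma cnt_eq_set:
  assumes "finite A" "finite A'" "\<And>x. cnt A x = cnt A' x"
  shows "A = A'"
proof
  show "A \<subseteq> A'" using cnt_Suc_less[OF assms(1)] cnt_Suc_less[OF assms(2)] assms(3) by auto
  show "A' \<subseteq> A" using cnt_Suc_less[OF assms(1)] cnt_Suc_less[OF assms(2)] assms(3) by auto
qed

lemma cellF_swap: "card A = card B \<Longrightarrow> cellF A B r c = cellF B A c r"
  unfolding cellF_def by (auto simp: cnt_0)

locale frp =
  fixes a b :: nat and A B :: "nat set"
  assumes Asub: "A \<subseteq> {..<b}" and Bsub: "B \<subseteq> {..<a}" and eqc: "card A = card B"
begin

lemma finA: "finite A" using Asub finite_subset by blast
lemma finB: "finite B" using Bsub finite_subset by blast

lemma swap: "frp b a B A"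
  using Asub Bsub eqc by (unfold_locales) auto

lemma cell_le_b:
  assumes "cellF A B r c" shows "c \<le> b"
proof -
  from assms have r1: "1 \<le> r" and c1: "1 \<le> c" unfolding cellF_def by auto
  from assms consider "r \<le> c" "r \<le> cnt A (c - r)" | "c < r" "c \<le> cnt B (r - c)"
    unfolding cellF_def by auto
  then show ?thesis
  proof cases
    case 1
    have "cnt A (c - r) + (c - r) \<le> max b (c - r)" by (rule cnt_le_bound[OF Asub])
    then show ?thesis using 1 r1 by (auto simp: max_def split: if_splits)
  next
    case 2
    have "cnt B (r - c) \<le> card B" by (rule cnt_le_card[OF finB])
    then show ?thesis using 2 eqc card_bound[OF Asub] by simp
  qed
qed

lemma cell_left:
  assumes "cellF A B r (Suc c)" "1 \<le> c" shows "cellF A B r c"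
proof -
  from assms have r1: "1 \<le> r" unfolding cellF_def by auto
  from assms consider "r \<le> Suc c" "r \<le> cnt A (Suc c - r)" | "Suc c < r" "Suc c \<le> cnt B (r - Suc c)"
    unfolding cellF_def by auto
  then show ?thesis
  proof cases
    case 1
    show ?thesis
    proof (cases "r \<le> c")
      case True
      have "cnt A (Suc c - r) \<le> cnt A (c - r)" by (rule cnt_mono[OF finA]) simp
      then show ?thesis using True 1 r1 assms(2) unfolding cellF_def by auto
    next
      case False
      then have rc: "r = Suc c" using 1 by simp
      have "cnt A 1 \<le> cnt A 0" by (rule cnt_mono[OF finA]) simp
      have "r \<le> card A" using 1 rc cnt_le_card[OF finA, of 0] by (simp add: cnt_0)
      moreover have "card B \<le> cnt B 1 + 1" by (rule cnt_ge[OF finB])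
      ultimately have "c \<le> cnt B (r - c)" using rc eqc by simp
      then show ?thesis using rc r1 assms(2) unfolding cellF_def by auto
    qed
  next
    case 2
    have "r - c = Suc (r - Suc c)" using 2 by simp
    then have "cnt B (r - Suc c) \<le> Suc (cnt B (r - c))" using cnt_Suc[OF finB, of "r - Suc c"] by simp
    then show ?thesis using 2 r1 assms(2) unfolding cellF_def by auto
  qed
qed

end

lemma (in frp) cell_le_a: "cellF A B r c \<Longrightarrow> r \<le> a"
  using frp.cell_le_b[OF swap] cellF_swap[OF eqc] by blast

lemma (in frp) cell_up: "cellF A B (Suc r) c \<Longrightarrow> 1 \<le> r \<Longrightarrow> cellF A B r c"
  using frp.cell_left[OF swap] cellF_swap[OF eqc] by metis

context frp begin

lemma cellset_sub: "{c. cellF A B r c} \<subseteq> {1..b}"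
proof
  fix c assume "c \<in> {c. cellF A B r c}"
  then have h: "cellF A B r c" by simp
  then have "c \<le> b" by (rule cell_le_b)
  moreover have "1 \<le> c" using h by (simp add: cellF_def)
  ultimately show "c \<in> {1..b}" by simp
qed

lemma cellset_fin: "finite {c. cellF A B r c}"
  using cellset_sub finite_subset by blast

lemma cell_iff: "cellF A B r c \<longleftrightarrow> 1 \<le> r \<and> 1 \<le> c \<and> c \<le> frob A B r"
proof (cases "1 \<le> c")
  case True
  have "c \<le> frob A B r \<longleftrightarrow> c \<in> {c. cellF A B r c}" unfolding frob_def
  proof (rule card_le_iff_mem[OF cellset_fin _ _ True])
    fix c assume "c \<in> {c. cellF A B r c}" then show "1 \<le> c" by (simp add: cellF_def)
  next
    fix c assume "Suc c \<in> {c. cellF A B r c}" "1 \<le> c" then show "c \<in> {c. cellF A B r c}"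
      using cell_left by simp
  qed
  then show ?thesis using True by (auto simp: cellF_def)
next
  case False then show ?thesis by (auto simp: cellF_def)
qed

lemma frob_le_b: "frob A B r \<le> b"
  unfolding frob_def using card_mono[OF _ cellset_sub] by simp

lemma frob_Suc: "1 \<le> r \<Longrightarrow> frob A B (Suc r) \<le> frob A B r"
  unfolding frob_def using cell_up cellset_fin by (intro card_mono) auto

lemma frob_anti: assumes "1 \<le> i" "i \<le> j" shows "frob A B j \<le> frob A B i"
  using assms(2)
proof (induction j rule: dec_induct)
  case base then show ?case by simp
next
  case (step n) then show ?case using frob_Suc[of n] assms(1) by simp
qed

lemma frob_zero: "i = 0 \<or> a < i \<Longrightarrow> frob A B i = 0"
proof -
  assume h: "i = 0 \<or> a < i"
  have "{c. cellF A B i c} = {}"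
  proof -
    have "\<not> cellF A B i c" for c
    proof
      assume c: "cellF A B i c"
      then have "i \<le> a" by (rule cell_le_a)
      moreover have "1 \<le> i" using c by (simp add: cellF_def)
      ultimately show False using h by simp
    qed
    then show ?thesis by blast
  qed
  then show ?thesis unfolding frob_def by (metis card.empty)
qed

lemma frob_young: "frob A B \<in> young a b"
  unfolding young_def using frob_le_b frob_anti frob_zero by auto

lemma conj_frob: "1 \<le> c \<Longrightarrow> conjugate (frob A B) c = frob B A c"
proof -
  assume c: "1 \<le> c"
  have "{i. 1 \<le> i \<and> c \<le> frob A B i} = {i. cellF B A c i}"
    using c cell_iff cellF_swap[OF eqc] by auto
  then show ?thesis unfolding conjugate_def frob_def by simp
qed

lemma durfee_frob: "durfee (frob A B) = card A"
proof -
  have P: "d \<le> frob A B d \<longleftrightarrow> d \<le> card A" for d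
  proof (cases "d = 0")
    case True then show ?thesis by simp
  next
    case False
    then have "d \<le> frob A B d \<longleftrightarrow> cellF A B d d" using cell_iff by auto
    also have "\<dots> \<longleftrightarrow> d \<le> card A" using False by (auto simp: cellF_def cnt_0)
    finally show ?thesis .
  qed
  show ?thesis unfolding durfee_def P by (rule Greatest_equality) auto
qed

lemma NA_fin: "1 \<le> i \<Longrightarrow> finite {x. i \<le> cnt A x}"
proof -
  assume i: "1 \<le> i"
  have "{x. i \<le> cnt A x} \<subseteq> {..<b}"
  proof
    fix x assume "x \<in> {x. i \<le> cnt A x}"
    then have "1 \<le> cnt A x" using i by simp
    moreover have "cnt A x + x \<le> max b x" by (rule cnt_le_bound[OF Asub])
    ultimately show "x \<in> {..<b}" by (auto simp: max_def split: if_splits)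
  qed
  then show ?thesis using finite_subset by blast
qed

lemma frob_row:
  assumes "1 \<le> i" "i \<le> card A"
  shows "frob A B i = (i - 1) + NA A i"
proof -
  have "{c. cellF A B i c} = {1..<i} \<union> (\<lambda>x. x + i) ` {x. i \<le> cnt A x}"
  proof (intro equalityI subsetI)
    fix c assume "c \<in> {c. cellF A B i c}"
    then have h: "cellF A B i c" by simp
    show "c \<in> {1..<i} \<union> (\<lambda>x. x + i) ` {x. i \<le> cnt A x}"
    proof (cases "c < i")
      case True then show ?thesis using h by (auto simp: cellF_def)
    next
      case False
      then have "i \<le> cnt A (c - i)" using h by (auto simp: cellF_def)
      moreover have "c = (c - i) + i" using False by simp
      ultimately show ?thesis by blast
    qed
  next
    fix c assume "c \<in> {1..<i} \<union> (\<lambda>x. x + i) ` {x. i \<le> cnt A x}"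
    then consider "1 \<le> c" "c < i" | x where "c = x + i" "i \<le> cnt A x" by auto
    then show "c \<in> {c. cellF A B i c}"
    proof cases
      case 1
      have "card B \<le> cnt B (i - c) + (i - c)" by (rule cnt_ge[OF finB])
      then have "c \<le> cnt B (i - c)" using assms eqc 1 by simp
      then show ?thesis using 1 assms by (simp add: cellF_def)
    next
      case 2 then show ?thesis using assms by (simp add: cellF_def)
    qed
  qed
  moreover have "{1..<i} \<inter> (\<lambda>x. x + i) ` {x. i \<le> cnt A x} = {}" by auto
  ultimately have "frob A B i = card {1..<i} + card ((\<lambda>x. x + i) ` {x. i \<le> cnt A x})"
    unfolding frob_def using NA_fin[OF assms(1)] by (simp add: card_Un_disjoint)
  also have "\<dots> = (i - 1) + NA A i" unfolding NA_def
    by (subst card_image) (auto simp: inj_on_def)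
  finally show ?thesis .
qed

lemma NA_pos: "1 \<le> i \<Longrightarrow> i \<le> card A \<Longrightarrow> 1 \<le> NA A i"
proof -
  assume i: "1 \<le> i" "i \<le> card A"
  have "0 \<in> {x. i \<le> cnt A x}" using i by (simp add: cnt_0)
  then have "{x. i \<le> cnt A x} \<noteq> {}" by blast
  then show ?thesis unfolding NA_def using NA_fin[OF i(1)] by (simp add: Suc_le_eq card_gt_0_iff)
qed

lemma hook_frob: "hookdec (frob A B) = {NA A i + NA B i - 1 | i. 1 \<le> i \<and> i \<le> card A}"
proof -
  have "frob A B i + conjugate (frob A B) i + 1 - 2 * i = NA A i + NA B i - 1"
    if "1 \<le> i" "i \<le> card A" for i
  proof -
    have "frob A B i = (i - 1) + NA A i" by (rule frob_row[OF that])
    moreover have "conjugate (frob A B) i = (i - 1) + NA B i"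
      using conj_frob[OF that(1)] frp.frob_row[OF swap that(1)] that(2) eqc by simp
    moreover have "1 \<le> NA A i" by (rule NA_pos[OF that])
    moreover have "1 \<le> NA B i" using frp.NA_pos[OF swap that(1)] that(2) eqc by simp
    ultimately show ?thesis using that by simp
  qed
  then show ?thesis unfolding hookdec_def durfee_frob by (auto; metis)
qed

end


lemma nat_eq_by_le: "(\<And>r. 1 \<le> r \<Longrightarrow> r \<le> (m::nat) \<longleftrightarrow> r \<le> m') \<Longrightarrow> m = m'"
proof -
  assume h: "\<And>r. 1 \<le> r \<Longrightarrow> r \<le> (m::nat) \<longleftrightarrow> r \<le> m'"
  show "m = m'"
  proof (rule ccontr)
    assume "m \<noteq> m'"
    then consider "m < m'" | "m' < m" by linarith
    then show False
    proof cases
      case 1 then show False using h[of m'] by simp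
    next
      case 2 then show False using h[of m] by simp
    qed
  qed
qed

lemma frob_inj:
  assumes p: "(A, B) \<in> pairs a b" and p': "(A', B') \<in> pairs a b" and e: "frob A B = frob A' B'"
  shows "A = A' \<and> B = B'"
proof -
  interpret F: frp a b A B using p unfolding pairs_def by unfold_locales auto
  interpret F': frp a b A' B' using p' unfolding pairs_def by unfold_locales auto
  have ce: "cellF A B r c = cellF A' B' r c" for r c
    using F.cell_iff F'.cell_iff e by simp
  have "cnt A x = cnt A' x" for x
  proof (rule nat_eq_by_le)
    fix r :: nat assume r: "1 \<le> r"
    have "r \<le> cnt A x \<longleftrightarrow> cellF A B r (r + x)" using r by (simp add: cellF_def)
    also have "\<dots> \<longleftrightarrow> cellF A' B' r (r + x)" by (rule ce)
    also have "\<dots> \<longleftrightarrow> r \<le> cnt A' x" using r by (simp add: cellF_def)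
    finally show "r \<le> cnt A x \<longleftrightarrow> r \<le> cnt A' x" .
  qed
  then have AA: "A = A'" using cnt_eq_set F.finA F'.finA by blast
  have "cnt B x = cnt B' x" for x
  proof (cases "x = 0")
    case True then show ?thesis using AA F.eqc F'.eqc by (simp add: cnt_0)
  next
    case False
    show ?thesis
    proof (rule nat_eq_by_le)
      fix c :: nat assume c: "1 \<le> c"
      have "c \<le> cnt B x \<longleftrightarrow> cellF A B (c + x) c" using c False by (simp add: cellF_def)
      also have "\<dots> \<longleftrightarrow> cellF A' B' (c + x) c" by (rule ce)
      also have "\<dots> \<longleftrightarrow> c \<le> cnt B' x" using c False by (simp add: cellF_def)
      finally show "c \<le> cnt B x \<longleftrightarrow> c \<le> cnt B' x" .
    qed
  qed
  then have "B = B'" using cnt_eq_set F.finB F'.finB by blast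
  then show ?thesis using AA by simp
qed

lemma cnt_image: "inj_on f S \<Longrightarrow> cnt (f ` S) x = card {i \<in> S. x \<le> f i}"
proof -
  assume inj: "inj_on f S"
  have "{y \<in> f ` S. x \<le> y} = f ` {i \<in> S. x \<le> f i}" by auto
  moreover have "inj_on f {i \<in> S. x \<le> f i}" using inj by (rule inj_on_subset) auto
  ultimately show ?thesis unfolding cnt_def by (simp add: card_image)
qed

locale yg =
  fixes a b :: nat and lam :: "nat \<Rightarrow> nat"
  assumes Y: "lam \<in> young a b"
begin

lemma le_b: "lam i \<le> b" using Y unfolding young_def by auto
lemma anti: "1 \<le> i \<Longrightarrow> i \<le> j \<Longrightarrow> lam j \<le> lam i" using Y unfolding young_def by auto
lemma zero: "i = 0 \<or> a < i \<Longrightarrow> lam i = 0" using Y unfolding young_def by auto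

lemma cset_sub: "1 \<le> c \<Longrightarrow> {i. 1 \<le> i \<and> c \<le> lam i} \<subseteq> {1..a}"
proof
  fix i assume c: "1 \<le> c" and "i \<in> {i. 1 \<le> i \<and> c \<le> lam i}"
  then have "1 \<le> i" "c \<le> lam i" by auto
  then have "\<not> a < i" using zero[of i] c by auto
  then show "i \<in> {1..a}" using \<open>1 \<le> i\<close> by simp
qed

lemma conj_iff: "1 \<le> r \<Longrightarrow> 1 \<le> c \<Longrightarrow> r \<le> conjugate lam c \<longleftrightarrow> c \<le> lam r"
proof -
  assume r: "1 \<le> r" and c: "1 \<le> c"
  have "r \<le> card {i. 1 \<le> i \<and> c \<le> lam i} \<longleftrightarrow> r \<in> {i. 1 \<le> i \<and> c \<le> lam i}"
  proof (rule card_le_iff_mem[OF _ _ _ r])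
    show "finite {i. 1 \<le> i \<and> c \<le> lam i}" using cset_sub[OF c] finite_subset by blast
  next
    fix i assume "i \<in> {i. 1 \<le> i \<and> c \<le> lam i}" then show "1 \<le> i" by simp
  next
    fix i assume "Suc i \<in> {i. 1 \<le> i \<and> c \<le> lam i}" "1 \<le> i"
    then show "i \<in> {i. 1 \<le> i \<and> c \<le> lam i}" using anti[of i "Suc i"] by auto
  qed
  then show ?thesis unfolding conjugate_def using r by simp
qed

lemma conj_le_a: "1 \<le> c \<Longrightarrow> conjugate lam c \<le> a"
  unfolding conjugate_def using card_mono[OF _ cset_sub] by fastforce

lemma conj_anti: "1 \<le> i \<Longrightarrow> i \<le> j \<Longrightarrow> conjugate lam j \<le> conjugate lam i"
  unfolding conjugate_def using cset_sub finite_subset by (intro card_mono) (blast, auto)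

definition d where "d = durfee lam"

lemma d_prop: "d \<le> lam d" and d_max: "\<And>y. y \<le> lam y \<Longrightarrow> y \<le> d"
proof -
  have bnd: "\<And>y. y \<le> lam y \<Longrightarrow> y \<le> b" using le_b order_trans by blast
  show "d \<le> lam d" unfolding d_def durfee_def by (rule GreatestI_nat[where k=0 and b=b]) (auto intro: bnd)
  show "\<And>y. y \<le> lam y \<Longrightarrow> y \<le> d" unfolding d_def durfee_def
    by (rule Greatest_le_nat[where b=b]) (auto intro: bnd)
qed

lemma dur_iff: "1 \<le> i \<Longrightarrow> i \<le> d \<longleftrightarrow> i \<le> lam i"
proof
  assume "1 \<le> i" "i \<le> d"
  then have "lam d \<le> lam i" by (rule anti)
  then show "i \<le> lam i" using d_prop \<open>i \<le> d\<close> by simp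
next
  assume "i \<le> lam i" then show "i \<le> d" by (rule d_max)
qed

lemma conj_dur: "1 \<le> i \<Longrightarrow> i \<le> d \<longleftrightarrow> i \<le> conjugate lam i"
  using dur_iff conj_iff by simp

lemma d_le_a: "d \<le> a"
proof (rule ccontr)
  assume "\<not> d \<le> a"
  then have "lam d = 0" using zero by simp
  then show False using d_prop \<open>\<not> d \<le> a\<close> by simp
qed

definition AF where "AF = (\<lambda>i. lam i - i) ` {1..d}"
definition BF where "BF = (\<lambda>i. conjugate lam i - i) ` {1..d}"

lemma injA: "inj_on (\<lambda>i. lam i - i) {1..d}"
proof (rule inj_onI)
  have k: "lam j - j < lam i - i" if "i \<in> {1..d}" "j \<in> {1..d}" "i < j" for i j
  proof -
    have "lam j \<le> lam i" using that by (intro anti) auto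
    moreover have "j \<le> lam j" using that dur_iff by auto
    ultimately show ?thesis using that by simp
  qed
  fix i j assume "i \<in> {1..d}" "j \<in> {1..d}" "lam i - i = lam j - j"
  then show "i = j" using k[of i j] k[of j i] by (metis nat_neq_iff order_less_irrefl)
qed

lemma injB: "inj_on (\<lambda>i. conjugate lam i - i) {1..d}"
proof (rule inj_onI)
  have k: "conjugate lam j - j < conjugate lam i - i" if "i \<in> {1..d}" "j \<in> {1..d}" "i < j" for i j
  proof -
    have "conjugate lam j \<le> conjugate lam i" using that by (intro conj_anti) auto
    moreover have "j \<le> conjugate lam j" using that conj_dur by auto
    ultimately show ?thesis using that by simp
  qed
  fix i j assume "i \<in> {1..d}" "j \<in> {1..d}" "conjugate lam i - i = conjugate lam j - j"
  then show "i = j" using k[of i j] k[of j i] by (metis nat_neq_iff order_less_irrefl)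
qed

lemma pairs_mem: "(AF, BF) \<in> pairs a b"
proof -
  have "AF \<subseteq> {..<b}"
  proof
    fix x assume "x \<in> AF"
    then obtain i where "i \<in> {1..d}" "x = lam i - i" unfolding AF_def by auto
    moreover have "lam i \<le> b" by (rule le_b)
    moreover have "i \<le> lam i" using \<open>i \<in> {1..d}\<close> dur_iff by auto
    ultimately show "x \<in> {..<b}" by auto
  qed
  moreover have "BF \<subseteq> {..<a}"
  proof
    fix x assume "x \<in> BF"
    then obtain i where "i \<in> {1..d}" "x = conjugate lam i - i" unfolding BF_def by auto
    moreover have "conjugate lam i \<le> a" using \<open>i \<in> {1..d}\<close> conj_le_a by auto
    moreover have "i \<le> conjugate lam i" using \<open>i \<in> {1..d}\<close> conj_dur by auto
    ultimately show "x \<in> {..<a}" by auto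
  qed
  moreover have "card AF = card BF"
    unfolding AF_def BF_def using card_image[OF injA] card_image[OF injB] by simp
  ultimately show ?thesis unfolding pairs_def by simp
qed

lemma cntA_iff: "1 \<le> r \<Longrightarrow> r \<le> cnt AF x \<longleftrightarrow> r \<le> d \<and> x \<le> lam r - r"
proof -
  assume r: "1 \<le> r"
  have "r \<le> card {i \<in> {1..d}. x \<le> lam i - i} \<longleftrightarrow> r \<in> {i \<in> {1..d}. x \<le> lam i - i}"
  proof (rule card_le_iff_mem[OF _ _ _ r])
    show "finite {i \<in> {1..d}. x \<le> lam i - i}" by simp
  next
    fix i assume "i \<in> {i \<in> {1..d}. x \<le> lam i - i}" then show "1 \<le> i" by simp
  next
    fix i assume h: "Suc i \<in> {i \<in> {1..d}. x \<le> lam i - i}" "1 \<le> i"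
    then have "lam (Suc i) \<le> lam i" by (intro anti) auto
    then show "i \<in> {i \<in> {1..d}. x \<le> lam i - i}" using h by auto
  qed
  then show ?thesis unfolding AF_def cnt_image[OF injA] using r by simp
qed

lemma cntB_iff: "1 \<le> r \<Longrightarrow> r \<le> cnt BF x \<longleftrightarrow> r \<le> d \<and> x \<le> conjugate lam r - r"
proof -
  assume r: "1 \<le> r"
  have "r \<le> card {i \<in> {1..d}. x \<le> conjugate lam i - i} \<longleftrightarrow> r \<in> {i \<in> {1..d}. x \<le> conjugate lam i - i}"
  proof (rule card_le_iff_mem[OF _ _ _ r])
    show "finite {i \<in> {1..d}. x \<le> conjugate lam i - i}" by simp
  next
    fix i assume "i \<in> {i \<in> {1..d}. x \<le> conjugate lam i - i}" then show "1 \<le> i" by simp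
  next
    fix i assume h: "Suc i \<in> {i \<in> {1..d}. x \<le> conjugate lam i - i}" "1 \<le> i"
    then have "conjugate lam (Suc i) \<le> conjugate lam i" by (intro conj_anti) auto
    then show "i \<in> {i \<in> {1..d}. x \<le> conjugate lam i - i}" using h by auto
  qed
  then show ?thesis unfolding BF_def cnt_image[OF injB] using r by simp
qed

lemma cell_lam: "cellF AF BF r c \<longleftrightarrow> 1 \<le> r \<and> 1 \<le> c \<and> c \<le> lam r"
proof (cases "1 \<le> r \<and> 1 \<le> c")
  case False then show ?thesis by (auto simp: cellF_def)
next
  case True
  then have r: "1 \<le> r" and c: "1 \<le> c" by auto
  show ?thesis
  proof (cases "r \<le> c")
    case rc: True
    have "cellF AF BF r c \<longleftrightarrow> r \<le> cnt AF (c - r)" using True rc by (simp add: cellF_def)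
    also have "\<dots> \<longleftrightarrow> r \<le> d \<and> c - r \<le> lam r - r" by (rule cntA_iff[OF r])
    also have "\<dots> \<longleftrightarrow> c \<le> lam r"
    proof
      assume h: "r \<le> d \<and> c - r \<le> lam r - r"
      then have "r \<le> lam r" using dur_iff r by simp
      then show "c \<le> lam r" using h rc by linarith
    next
      assume h: "c \<le> lam r"
      then have "r \<le> lam r" using rc by simp
      then have "r \<le> d" using dur_iff r by simp
      then show "r \<le> d \<and> c - r \<le> lam r - r" using h by simp
    qed
    finally show ?thesis using True by simp
  next
    case rc: False
    have "cellF AF BF r c \<longleftrightarrow> c \<le> cnt BF (r - c)" using True rc by (simp add: cellF_def)
    also have "\<dots> \<longleftrightarrow> c \<le> d \<and> r - c \<le> conjugate lam c - c" by (rule cntB_iff[OF c])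
    also have "\<dots> \<longleftrightarrow> c \<le> lam r"
    proof
      assume h: "c \<le> d \<and> r - c \<le> conjugate lam c - c"
      then have "c \<le> conjugate lam c" using conj_dur c by simp
      then have "r \<le> conjugate lam c" using h rc by linarith
      then show "c \<le> lam r" using conj_iff r c by simp
    next
      assume h: "c \<le> lam r"
      have "lam r \<le> lam c" using rc c by (intro anti) auto
      then have "c \<le> d" using h dur_iff c by simp
      moreover have "r \<le> conjugate lam c" using h conj_iff r c by simp
      ultimately show "c \<le> d \<and> r - c \<le> conjugate lam c - c" by simp
    qed
    finally show ?thesis using True by simp
  qed
qed

lemma frob_AF: "frob AF BF = lam"
proof
  fix r
  show "frob AF BF r = lam r"
  proof (cases "r = 0")
    case True
    then show ?thesis using zero by (simp add: frob_def cellF_def)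
  next
    case False
    then have "{c. cellF AF BF r c} = {1..lam r}" using cell_lam by auto
    then show ?thesis unfolding frob_def by simp
  qed
qed

end

lemma frob_bij: "bij_betw (\<lambda>(A, B). frob A B) (pairs a b) (young a b)"
proof -
  have "inj_on (\<lambda>(A, B). frob A B) (pairs a b)"
    by (intro inj_onI) (auto dest: frob_inj)
  moreover have "(\<lambda>(A, B). frob A B) ` pairs a b = young a b"
  proof (intro equalityI subsetI)
    fix l assume "l \<in> (\<lambda>(A, B). frob A B) ` pairs a b"
    then obtain A B where "(A, B) \<in> pairs a b" "l = frob A B" by auto
    then interpret F: frp a b A B unfolding pairs_def by unfold_locales auto
    show "l \<in> young a b" using F.frob_young \<open>l = frob A B\<close> by simp
  next
    fix l assume "l \<in> young a b"
    then interpret G: yg a b l by unfold_locales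
    have "l = (\<lambda>(A, B). frob A B) (G.AF, G.BF)" using G.frob_AF by simp
    then show "l \<in> (\<lambda>(A, B). frob A B) ` pairs a b" using G.pairs_mem by blast
  qed
  ultimately show ?thesis unfolding bij_betw_def by simp
qed


definition words :: "nat \<Rightarrow> nat \<Rightarrow> nat set set" where
  "words a b = {D. D \<subseteq> {1..a + b} \<and> card D = a}"

lemma card_words: "card (words a b) = (a + b) choose a"
  unfolding words_def using n_subsets[of "{1..a+b}" a] by simp

lemma card_pairs: "card (pairs a b) = (a + b) choose a"
proof -
  define SA where "SA k = {A. A \<subseteq> {..<b} \<and> card A = k}" for k
  define SB where "SB k = {B. B \<subseteq> {..<a} \<and> card B = k}" for k
  have eq: "pairs a b = (\<Union>k\<in>{..a}. SA k \<times> SB k)"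
  proof (intro equalityI subsetI)
    fix p assume "p \<in> pairs a b"
    then obtain A B where p: "p = (A, B)" "A \<subseteq> {..<b}" "B \<subseteq> {..<a}" "card A = card B"
      unfolding pairs_def by auto
    have "card B \<le> a" using card_bound[OF p(3)] .
    then show "p \<in> (\<Union>k\<in>{..a}. SA k \<times> SB k)" using p unfolding SA_def SB_def by auto
  next
    fix p assume "p \<in> (\<Union>k\<in>{..a}. SA k \<times> SB k)"
    then show "p \<in> pairs a b" unfolding SA_def SB_def pairs_def by auto
  qed
  have finA: "finite (SA k)" for k unfolding SA_def by (rule finite_subset[of _ "Pow {..<b}"]) auto
  have finB: "finite (SB k)" for k unfolding SB_def by (rule finite_subset[of _ "Pow {..<a}"]) auto
  have "card (pairs a b) = (\<Sum>k\<in>{..a}. card (SA k \<times> SB k))"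
    unfolding eq by (rule card_UN_disjoint) (auto simp: finA finB SA_def SB_def)
  also have "\<dots> = (\<Sum>k\<le>a. (b choose k) * (a choose (a - k)))"
  proof (rule sum.cong)
    fix k assume "k \<in> {..a}"
    then have "a choose k = a choose (a - k)" by (intro binomial_symmetric) simp
    moreover have "card (SA k) = b choose k" unfolding SA_def using n_subsets[of "{..<b}" k] by simp
    moreover have "card (SB k) = a choose k" unfolding SB_def using n_subsets[of "{..<a}" k] by simp
    ultimately show "card (SA k \<times> SB k) = (b choose k) * (a choose (a - k))"
      by (simp add: card_cartesian_product)
  qed simp
  also have "\<dots> = (b + a) choose a" by (rule vandermonde)
  finally show ?thesis by (simp add: add.commute)
qed

definition yc :: "nat set \<Rightarrow> nat \<Rightarrow> nat" where
  "yc D p = card (D \<inter> {1..p})"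
definition zc :: "nat set \<Rightarrow> nat \<Rightarrow> nat" where
  "zc D p = card ({1..p} - D)"
definition peaks :: "nat \<Rightarrow> nat set \<Rightarrow> nat set" where
  "peaks n D = {i. 1 \<le> i \<and> i < n \<and> i \<notin> D \<and> Suc i \<in> D}"

lemma yz_sum: "yc D p + zc D p = p"
proof -
  have "card (D \<inter> {1..p}) + card ({1..p} - D) = card {1..p}"
    using card_Un_disjoint[of "D \<inter> {1..p}" "{1..p} - D"] by (metis Int_Diff_Un Int_Diff_disjoint Int_commute finite_atLeastAtMost finite_Int finite_Diff)
  then show ?thesis unfolding yc_def zc_def by simp
qed

lemma yc_Suc: "yc D (Suc p) = yc D p + (if Suc p \<in> D then 1 else 0)"
proof -
  have "D \<inter> {1..Suc p} = (D \<inter> {1..p}) \<union> (D \<inter> {Suc p})" by auto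
  then show ?thesis unfolding yc_def by (auto simp: card_insert_if Int_insert_right)
qed

lemma zc_Suc: "zc D (Suc p) = zc D p + (if Suc p \<in> D then 0 else 1)"
  using yz_sum[of D p] yz_sum[of D "Suc p"] yc_Suc[of D p] by (auto split: if_splits)

lemma yc_mono: "p \<le> q \<Longrightarrow> yc D p \<le> yc D q"
  unfolding yc_def by (intro card_mono) auto
lemma zc_mono: "p \<le> q \<Longrightarrow> zc D p \<le> zc D q"
  unfolding zc_def by (intro card_mono) auto

lemma yc_interval: "p \<le> q \<Longrightarrow> yc D q = yc D p + card (D \<inter> {p<..q})"
proof -
  assume pq: "p \<le> q"
  have "D \<inter> {1..q} = (D \<inter> {1..p}) \<union> (D \<inter> {p<..q})" using pq by auto
  moreover have "(D \<inter> {1..p}) \<inter> (D \<inter> {p<..q}) = {}" by auto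
  ultimately show ?thesis unfolding yc_def by (simp add: card_Un_disjoint)
qed

lemma yc_const: "p \<le> q \<Longrightarrow> (\<forall>x. p < x \<and> x \<le> q \<longrightarrow> x \<notin> D) \<Longrightarrow> yc D q = yc D p"
proof -
  assume "p \<le> q" "\<forall>x. p < x \<and> x \<le> q \<longrightarrow> x \<notin> D"
  then have "D \<inter> {p<..q} = {}" by auto
  then show ?thesis using yc_interval[OF \<open>p \<le> q\<close>, of D] by simp
qed

lemma yc_le_card: "finite D \<Longrightarrow> yc D p \<le> card D"
  unfolding yc_def by (intro card_mono) auto

lemma yc_full: "D \<subseteq> {1..n} \<Longrightarrow> yc D n = card D"
  unfolding yc_def by (simp add: Int_absorb2)

lemma zc_le: "D \<subseteq> {1..n} \<Longrightarrow> p \<le> n \<Longrightarrow> zc D p \<le> n - card D"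
proof -
  assume D: "D \<subseteq> {1..n}" and p: "p \<le> n"
  have "zc D p \<le> zc D n" using p by (rule zc_mono)
  also have "\<dots> = n - card D" using yz_sum[of D n] yc_full[OF D] by simp
  finally show ?thesis .
qed

lemma peaks_y_less: "s \<in> peaks n D \<Longrightarrow> s' \<in> peaks n D \<Longrightarrow> s < s' \<Longrightarrow> yc D s < yc D s'"
proof -
  assume s: "s \<in> peaks n D" and s': "s' \<in> peaks n D" and l: "s < s'"
  have "yc D (Suc s) = yc D s + 1" using s yc_Suc[of D s] unfolding peaks_def by simp
  moreover have "yc D (Suc s) \<le> yc D s'" using l by (intro yc_mono) simp
  ultimately show ?thesis by simp
qed

lemma peaks_z_less: "s \<in> peaks n D \<Longrightarrow> s' \<in> peaks n D \<Longrightarrow> s < s' \<Longrightarrow> zc D s < zc D s'"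
proof -
  assume s: "s \<in> peaks n D" and s': "s' \<in> peaks n D" and l: "s < s'"
  obtain t where t: "s' = Suc t" using l by (cases s') auto
  have "zc D s' = zc D t + 1" using s' zc_Suc[of D t] t unfolding peaks_def by simp
  moreover have "zc D s \<le> zc D t" using l t by (intro zc_mono) simp
  ultimately show ?thesis by simp
qed

lemma strict_inj: assumes h: "\<And>s s'. s \<in> P \<Longrightarrow> s' \<in> P \<Longrightarrow> s < (s'::nat) \<Longrightarrow> f s < (f s' :: nat)"
  shows "inj_on f P"
proof (rule inj_onI)
  fix x y assume xy: "x \<in> P" "y \<in> P" "f x = f y"
  show "x = y"
  proof (rule linorder_cases[of x y])
    assume "x < y" then show ?thesis using h[of x y] xy by simp
  next
    assume "y < x" then show ?thesis using h[of y x] xy by simp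
  qed
qed

lemma peaks_fin: "finite (peaks n D)"
  unfolding peaks_def by (rule finite_subset[of _ "{..<n}"]) auto

definition PiW :: "nat \<Rightarrow> nat \<Rightarrow> nat set \<Rightarrow> nat set \<times> nat set" where
  "PiW a b D = ((\<lambda>s. zc D s - 1) ` peaks (a + b) D, yc D ` peaks (a + b) D)"

lemma zc_pos: "s \<in> peaks n D \<Longrightarrow> 1 \<le> zc D s"
proof -
  assume "s \<in> peaks n D"
  then have "s \<in> {1..s} - D" unfolding peaks_def by auto
  then have "{1..s} - D \<noteq> {}" by blast
  then show ?thesis unfolding zc_def by (simp add: Suc_le_eq card_gt_0_iff)
qed

lemma zm_less: "s \<in> peaks n D \<Longrightarrow> s' \<in> peaks n D \<Longrightarrow> s < s' \<Longrightarrow> zc D s - 1 < zc D s' - 1"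
  using peaks_z_less[of s n D s'] zc_pos[of s n D] by simp

lemma PiW_pairs:
  assumes D: "D \<in> words a b"
  shows "PiW a b D \<in> pairs a b"
proof -
  let ?P = "peaks (a + b) D"
  have Dsub: "D \<subseteq> {1..a+b}" and cD: "card D = a" using D unfolding words_def by auto
  have "(\<lambda>s. zc D s - 1) ` ?P \<subseteq> {..<b}"
  proof
    fix x assume "x \<in> (\<lambda>s. zc D s - 1) ` ?P"
    then obtain s where s: "s \<in> ?P" "x = zc D s - 1" by auto
    have "zc D s \<le> a + b - card D" using s Dsub unfolding peaks_def by (intro zc_le) auto
    moreover have "1 \<le> zc D s" using s(1) by (rule zc_pos)
    ultimately show "x \<in> {..<b}" using s cD by auto
  qed
  moreover have "yc D ` ?P \<subseteq> {..<a}"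
  proof
    fix x assume "x \<in> yc D ` ?P"
    then obtain s where s: "s \<in> ?P" "x = yc D s" by auto
    have "yc D (Suc s) = yc D s + 1" using s yc_Suc[of D s] unfolding peaks_def by simp
    moreover have "yc D (Suc s) \<le> card D" using Dsub finite_subset by (intro yc_le_card) blast
    ultimately show "x \<in> {..<a}" using s cD by simp
  qed
  moreover have "card ((\<lambda>s. zc D s - 1) ` ?P) = card (yc D ` ?P)"
  proof -
    have "inj_on (\<lambda>s. zc D s - 1) ?P" by (rule strict_inj) (rule zm_less)
    moreover have "inj_on (yc D) ?P" by (rule strict_inj) (rule peaks_y_less)
    ultimately show ?thesis by (simp add: card_image)
  qed
  ultimately show ?thesis unfolding PiW_def pairs_def by simp
qed


lemma upset_rank:
  assumes "finite P" "s \<in> P" "U \<subseteq> P" "\<And>u v. u \<in> U \<Longrightarrow> v \<in> P \<Longrightarrow> u \<le> v \<Longrightarrow> v \<in> U"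
  shows "rkt P s \<le> card U \<longleftrightarrow> s \<in> U"
proof
  assume h: "rkt P s \<le> card U"
  show "s \<in> U"
  proof (rule ccontr)
    assume ns: "s \<notin> U"
    have "U \<subseteq> {y \<in> P. s \<le> y} - {s}"
    proof
      fix u assume u: "u \<in> U"
      have "s \<le> u"
      proof (rule ccontr)
        assume "\<not> s \<le> u" then have "u \<le> s" by simp
        then show False using assms(4)[OF u assms(2)] ns by simp
      qed
      then show "u \<in> {y \<in> P. s \<le> y} - {s}" using u assms(3) ns by auto
    qed
    then have "card U \<le> card ({y \<in> P. s \<le> y} - {s})" using assms(1) by (intro card_mono) auto
    also have "\<dots> < card {y \<in> P. s \<le> y}" using assms(1,2) by (intro card_Diff1_less) auto
    finally show False using h unfolding rkt_def by simp
  qed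
next
  assume "s \<in> U"
  then have "{y \<in> P. s \<le> y} \<subseteq> U" using assms(4) by auto
  then show "rkt P s \<le> card U" unfolding rkt_def using assms(1,3) finite_subset by (intro card_mono) blast+
qed

lemma rkt_image:
  assumes "finite P" "\<And>s s'. s \<in> P \<Longrightarrow> s' \<in> P \<Longrightarrow> s < s' \<Longrightarrow> f s < (f s' :: nat)" "s \<in> P"
  shows "rkt (f ` P) (f s) = rkt P s"
proof -
  have inj: "inj_on f P" by (rule strict_inj) (rule assms(2))
  have mono: "s1 \<in> P \<Longrightarrow> s2 \<in> P \<Longrightarrow> f s1 \<le> f s2 \<longleftrightarrow> s1 \<le> s2" for s1 s2
    using assms(2)[of s1 s2] assms(2)[of s2 s1] by (metis le_less not_less_iff_gr_or_eq)
  have "{y \<in> f ` P. f s \<le> y} = f ` {y \<in> P. s \<le> y}" using mono assms(3) by auto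
  moreover have "inj_on f {y \<in> P. s \<le> y}" using inj by (rule inj_on_subset) auto
  ultimately show ?thesis unfolding rkt_def by (simp add: card_image)
qed

context
  fixes a b :: nat and D :: "nat set"
  assumes Dw: "D \<in> words a b"
begin

abbreviation "PP \<equiv> peaks (a + b) D"
abbreviation "AA \<equiv> (\<lambda>s. zc D s - 1) ` PP"
abbreviation "BB \<equiv> yc D ` PP"

lemma NA_A: "s \<in> PP \<Longrightarrow> NA AA (rkt PP s) = zc D s"
proof -
  assume s: "s \<in> PP"
  have inj: "inj_on (\<lambda>s. zc D s - 1) PP" by (rule strict_inj) (rule zm_less)
  have "rkt PP s \<le> cnt AA x \<longleftrightarrow> x < zc D s" for x
  proof -
    have "cnt AA x = card {s' \<in> PP. x \<le> zc D s' - 1}" by (rule cnt_image[OF inj])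
    moreover have "rkt PP s \<le> card {s' \<in> PP. x \<le> zc D s' - 1} \<longleftrightarrow> s \<in> {s' \<in> PP. x \<le> zc D s' - 1}"
    proof (rule upset_rank[OF peaks_fin s])
      fix u v assume "u \<in> {s' \<in> PP. x \<le> zc D s' - 1}" "v \<in> PP" "u \<le> v"
      then show "v \<in> {s' \<in> PP. x \<le> zc D s' - 1}" using zm_less[of u "a+b" D v]
        by (cases "u = v") auto
    qed auto
    moreover have "1 \<le> zc D s" using s by (rule zc_pos)
    ultimately show ?thesis using s by auto
  qed
  then have "{x. rkt PP s \<le> cnt AA x} = {..<zc D s}" by auto
  then show ?thesis unfolding NA_def by simp
qed

lemma NA_B: "s \<in> PP \<Longrightarrow> NA BB (rkt PP s) = Suc (yc D s)"
proof -
  assume s: "s \<in> PP"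
  have inj: "inj_on (yc D) PP" by (rule strict_inj) (rule peaks_y_less)
  have "rkt PP s \<le> cnt BB x \<longleftrightarrow> x \<le> yc D s" for x
  proof -
    have "cnt BB x = card {s' \<in> PP. x \<le> yc D s'}" by (rule cnt_image[OF inj])
    moreover have "rkt PP s \<le> card {s' \<in> PP. x \<le> yc D s'} \<longleftrightarrow> s \<in> {s' \<in> PP. x \<le> yc D s'}"
    proof (rule upset_rank[OF peaks_fin s])
      fix u v assume "u \<in> {s' \<in> PP. x \<le> yc D s'}" "v \<in> PP" "u \<le> v"
      then show "v \<in> {s' \<in> PP. x \<le> yc D s'}" using peaks_y_less[of u "a+b" D v]
        by (cases "u = v") auto
    qed auto
    ultimately show ?thesis using s by auto
  qed
  then have "{x. rkt PP s \<le> cnt BB x} = {..yc D s}" by auto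
  then show ?thesis unfolding NA_def by simp
qed

lemma hook_PiW: "{NA AA i + NA BB i - 1 | i. 1 \<le> i \<and> i \<le> card AA} = PP"
proof -
  have inj: "inj_on (\<lambda>s. zc D s - 1) PP" by (rule strict_inj) (rule zm_less)
  have cA: "card AA = card PP" using inj by (simp add: card_image)
  have bij: "bij_betw (rkt PP) PP {1..card PP}" by (rule rkt_bij[OF peaks_fin])
  have val: "NA AA (rkt PP s) + NA BB (rkt PP s) - 1 = s" if "s \<in> PP" for s
    using NA_A[OF that] NA_B[OF that] yz_sum[of D s] by simp
  show ?thesis
  proof (intro equalityI subsetI)
    fix h assume "h \<in> {NA AA i + NA BB i - 1 | i. 1 \<le> i \<and> i \<le> card AA}"
    then obtain i where i: "1 \<le> i" "i \<le> card PP" "h = NA AA i + NA BB i - 1" using cA by auto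
    then have "i \<in> rkt PP ` PP" using bij unfolding bij_betw_def by auto
    then obtain s where "s \<in> PP" "i = rkt PP s" by auto
    then show "h \<in> PP" using val i by simp
  next
    fix s assume s: "s \<in> PP"
    then have "rkt PP s \<in> {1..card PP}" using bij unfolding bij_betw_def by auto
    then show "s \<in> {NA AA i + NA BB i - 1 | i. 1 \<le> i \<and> i \<le> card AA}"
      using val[OF s] cA by force
  qed
qed

end

lemma hook_frob_PiW:
  assumes D: "D \<in> words a b"
  shows "hookdec ((\<lambda>(A, B). frob A B) (PiW a b D)) = peaks (a + b) D"
proof -
  have p: "PiW a b D \<in> pairs a b" by (rule PiW_pairs[OF D])
  interpret F: frp a b "fst (PiW a b D)" "snd (PiW a b D)"
    using p unfolding pairs_def by unfold_locales auto
  show ?thesis using F.hook_frob hook_PiW[OF D] unfolding PiW_def by simp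
qed


lemma PiW_match:
  assumes D: "D \<in> words a b" and D': "D' \<in> words a b" and e: "PiW a b D = PiW a b D'"
    and s: "s \<in> peaks (a + b) D"
  shows "\<exists>s'\<in>peaks (a + b) D'. yc D s = yc D' s' \<and> zc D s = zc D' s'"
proof -
  let ?P = "peaks (a + b) D" and ?P' = "peaks (a + b) D'"
  have eA: "(\<lambda>s. zc D s - 1) ` ?P = (\<lambda>s. zc D' s - 1) ` ?P'" and eB: "yc D ` ?P = yc D' ` ?P'"
    using e unfolding PiW_def by auto
  have "yc D s \<in> yc D' ` ?P'" using s eB by blast
  then obtain s' where s': "s' \<in> ?P'" "yc D' s' = yc D s" by (auto simp: image_iff)
  have "zc D s - 1 \<in> (\<lambda>s. zc D' s - 1) ` ?P'" using s eA by blast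
  then obtain s'' where s'': "s'' \<in> ?P'" "zc D' s'' - 1 = zc D s - 1" by (auto simp: image_iff)
  have "rkt ?P' s'' = rkt ((\<lambda>s. zc D' s - 1) ` ?P') (zc D' s'' - 1)"
    by (rule rkt_image[symmetric, OF peaks_fin _ s''(1)]) (rule zm_less)
  also have "\<dots> = rkt ((\<lambda>s. zc D s - 1) ` ?P) (zc D s - 1)" using eA s''(2) by simp
  also have "\<dots> = rkt ?P s"
    by (rule rkt_image[OF peaks_fin _ s]) (rule zm_less)
  also have "\<dots> = rkt (yc D ` ?P) (yc D s)"
    by (rule rkt_image[symmetric, OF peaks_fin _ s]) (rule peaks_y_less)
  also have "\<dots> = rkt (yc D' ` ?P') (yc D' s')" using eB s'(2) by simp
  also have "\<dots> = rkt ?P' s'"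
    by (rule rkt_image[OF peaks_fin _ s'(1)]) (rule peaks_y_less)
  finally have "rkt ?P' s'' = rkt ?P' s'" .
  then have "s'' = s'" using rkt_bij[OF peaks_fin, of "a+b" D'] s'(1) s''(1)
    unfolding bij_betw_def inj_on_def by blast
  moreover have "1 \<le> zc D s" using s by (rule zc_pos)
  moreover have "1 \<le> zc D' s''" using s''(1) by (rule zc_pos)
  ultimately have "zc D' s' - 1 = zc D s - 1" "1 \<le> zc D' s'" "1 \<le> zc D s" using s'' by simp_all
  then have "zc D' s' = zc D s" by linarith
  then show ?thesis using s' by (intro bexI[where x=s']) simp_all
qed

lemma yc_eq_prefix: "(\<forall>i. i \<le> p \<longrightarrow> (i \<in> D \<longleftrightarrow> i \<in> D')) \<Longrightarrow> yc D p = yc D' p"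
proof -
  assume h: "\<forall>i. i \<le> p \<longrightarrow> (i \<in> D \<longleftrightarrow> i \<in> D')"
  then have "D \<inter> {1..p} = D' \<inter> {1..p}" by auto
  then show ?thesis unfolding yc_def by simp
qed

lemma zc_eq_prefix: "(\<forall>i. i \<le> p \<longrightarrow> (i \<in> D \<longleftrightarrow> i \<in> D')) \<Longrightarrow> zc D p = zc D' p"
  using yc_eq_prefix yz_sum by (metis add_left_cancel)

lemma first_diff:
  assumes D: "D \<in> words a b" and D': "D' \<in> words a b"
    and j: "j \<in> D" "j \<notin> D'" and pre: "\<forall>i<j. i \<in> D \<longleftrightarrow> i \<in> D'"
    and H1: "\<forall>s\<in>peaks (a + b) D. \<exists>s'\<in>peaks (a + b) D'. yc D s = yc D' s' \<and> zc D s = zc D' s'"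
    and H2: "\<forall>s'\<in>peaks (a + b) D'. \<exists>s\<in>peaks (a + b) D. yc D' s' = yc D s \<and> zc D' s' = zc D s"
  shows False
proof -
  let ?n = "a + b"
  have Dsub: "D \<subseteq> {1..?n}" "card D = a" and D'sub: "D' \<subseteq> {1..?n}" "card D' = a"
    using D D' unfolding words_def by auto
  have j1: "1 \<le> j" "j \<le> ?n" using j Dsub by auto
  define p0 where "p0 = j - 1"
  have jp: "j = Suc p0" using j1 p0_def by simp
  have yp: "yc D p0 = yc D' p0" and zp: "zc D p0 = zc D' p0"
    using pre jp by (auto intro!: yc_eq_prefix zc_eq_prefix)
  show False
  proof (cases "1 \<le> p0 \<and> p0 \<notin> D")
    case True
    then have "p0 \<in> peaks ?n D" using jp j1 j unfolding peaks_def by auto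
    then obtain s' where s': "s' \<in> peaks ?n D'" "yc D p0 = yc D' s'" "zc D p0 = zc D' s'" using H1 by blast
    have "s' = p0" using yz_sum[of D p0] yz_sum[of D' s'] s' by simp
    then show False using s'(1) jp j unfolding peaks_def by simp
  next
    case False
    have yj: "yc D j = yc D p0 + 1" using jp j yc_Suc[of D p0] by simp
    have yj': "yc D' j = yc D' p0" using jp j yc_Suc[of D' p0] by simp
    have "yc D j \<le> yc D ?n" using j1 by (intro yc_mono)
    then have "yc D' j < yc D' ?n" using yj yj' yp yc_full[OF Dsub(1)] yc_full[OF D'sub(1)] Dsub D'sub by simp
    then have "card (D' \<inter> {j<..?n}) > 0" using yc_interval[OF j1(2), of D'] by simp
    then have ex: "\<exists>x. j < x \<and> x \<in> D'" by (auto simp: card_gt_0_iff)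
    define j' where "j' = (LEAST x. j < x \<and> x \<in> D')"
    have j'p: "j < j'" "j' \<in> D'" using LeastI_ex[OF ex] unfolding j'_def by auto
    have j'min: "\<And>x. j < x \<Longrightarrow> x < j' \<Longrightarrow> x \<notin> D'" using not_less_Least unfolding j'_def by blast
    have j'n: "j' \<le> ?n" using j'p D'sub by auto
    define s' where "s' = j' - 1"
    have s'j: "Suc s' = j'" "j \<le> s'" using j'p s'_def by auto
    have noD': "\<And>x. p0 < x \<Longrightarrow> x \<le> s' \<Longrightarrow> x \<notin> D'"
    proof -
      fix x assume "p0 < x" "x \<le> s'"
      then have "x = j \<or> (j < x \<and> x < j')" using jp s'j by auto
      then show "x \<notin> D'" using j j'min by auto
    qed
    have s'pk: "s' \<in> peaks ?n D'"
      using s'j j'n j'p noD'[of s'] jp j1 unfolding peaks_def by auto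
    have ys': "yc D' s' = yc D' p0" using noD' s'j jp by (intro yc_const) auto
    have zs': "zc D' s' > zc D' p0"
    proof -
      have "zc D' s' + yc D' s' = s'" using yz_sum[of D' s'] by simp
      moreover have "zc D' p0 + yc D' p0 = p0" using yz_sum[of D' p0] by simp
      ultimately show ?thesis using ys' s'j jp by simp
    qed
    obtain s where s: "s \<in> peaks ?n D" "yc D' s' = yc D s" "zc D' s' = zc D s" using H2 s'pk by blast
    show False
    proof (cases "j \<le> s")
      case True
      then have "yc D j \<le> yc D s" by (rule yc_mono)
      then show False using s ys' yj yp by simp
    next
      case False
      then have "s \<le> p0" using jp by simp
      then have "zc D s \<le> zc D p0" by (rule zc_mono)
      then show False using s zs' zp by simp
    qed
  qed
qed

lemma PiW_inj:
  assumes D: "D \<in> words a b" and D': "D' \<in> words a b" and e: "PiW a b D = PiW a b D'"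
  shows "D = D'"
proof (rule ccontr)
  assume ne: "D \<noteq> D'"
  then have ex: "\<exists>j. (j \<in> D) \<noteq> (j \<in> D')" by blast
  define j where "j = (LEAST j. (j \<in> D) \<noteq> (j \<in> D'))"
  have jd: "(j \<in> D) \<noteq> (j \<in> D')" using LeastI_ex[OF ex] unfolding j_def .
  have pre: "\<forall>i<j. i \<in> D \<longleftrightarrow> i \<in> D'" using not_less_Least unfolding j_def by blast
  have H1: "\<forall>s\<in>peaks (a + b) D. \<exists>s'\<in>peaks (a + b) D'. yc D s = yc D' s' \<and> zc D s = zc D' s'"
    using PiW_match[OF D D' e] by blast
  have H2: "\<forall>s\<in>peaks (a + b) D'. \<exists>s'\<in>peaks (a + b) D. yc D' s = yc D s' \<and> zc D' s = zc D s'"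
    using PiW_match[OF D' D e[symmetric]] by blast
  show False
  proof (cases "j \<in> D")
    case True
    then have "j \<notin> D'" using jd by simp
    then show False using first_diff[OF D D' True _ pre H1] H2 by auto
  next
    case False
    then have "j \<in> D'" using jd by simp
    then show False using first_diff[OF D' D \<open>j \<in> D'\<close> False _ H2] pre H1 by auto
  qed
qed

lemma PiW_bij: "bij_betw (PiW a b) (words a b) (pairs a b)"
proof -
  have inj: "inj_on (PiW a b) (words a b)" by (intro inj_onI) (rule PiW_inj)
  have sub: "PiW a b ` words a b \<subseteq> pairs a b" using PiW_pairs by blast
  have finp: "finite (pairs a b)"
    by (rule finite_subset[of _ "Pow {..<b} \<times> Pow {..<a}"]) (auto simp: pairs_def)
  have "card (PiW a b ` words a b) = card (pairs a b)"
    using inj card_words card_pairs by (simp add: card_image)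
  then have "PiW a b ` words a b = pairs a b" using sub finp by (intro card_subset_eq) auto
  then show ?thesis using inj unfolding bij_betw_def by simp
qed


definition Op :: "nat \<Rightarrow> (nat \<Rightarrow> nat) \<Rightarrow> nat set" where
  "Op n p = {i \<in> {1..n}. i < p i}"
definition Cl :: "nat \<Rightarrow> (nat \<Rightarrow> nat) \<Rightarrow> nat set" where
  "Cl n p = {i \<in> {1..n}. p i < i}"
definition Fx :: "nat \<Rightarrow> (nat \<Rightarrow> nat) \<Rightarrow> nat set" where
  "Fx n p = {i \<in> {1..n}. p i = i}"
definition Fe :: "nat \<Rightarrow> nat \<Rightarrow> (nat \<Rightarrow> nat) \<Rightarrow> nat set" where
  "Fe a n p = {f \<in> Fx n p. rkb (Fx n p) f \<le> a - card (Cl n p)}"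
definition Phi :: "nat \<Rightarrow> nat \<Rightarrow> (nat \<Rightarrow> nat) \<Rightarrow> nat set" where
  "Phi a n p = Cl n p \<union> Fe a n p"

locale invl =
  fixes n :: nat and p :: "nat \<Rightarrow> nat"
  assumes perm: "p permutes {1..n}"
    and invo: "\<And>x. p (p x) = x"
    and nonnest: "\<And>i j. i \<in> Op n p \<Longrightarrow> j \<in> Op n p \<Longrightarrow> i < j \<Longrightarrow> p i < p j"
    and uncov: "\<And>i f. i \<in> Op n p \<Longrightarrow> f \<in> Fx n p \<Longrightarrow> i < f \<Longrightarrow> f < p i \<Longrightarrow> False"

lemma inv321_invl:
  assumes "p \<in> inv321 n" shows "invl n p"
proof -
  have perm: "p permutes {1..n}" and pp: "p \<circ> p = id" and av: "avoids321 p n"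
    using assms unfolding inv321_def by auto
  have invo: "p (p x) = x" for x using pp by (metis comp_apply id_apply)
  have inr: "x \<in> {1..n} \<Longrightarrow> p x \<in> {1..n}" for x using permutes_in_image[OF perm] by simp
  show ?thesis
  proof (rule invl.intro[OF perm invo])
    fix i j assume i: "i \<in> Op n p" and j: "j \<in> Op n p" and ij: "i < j"
    show "p i < p j"
    proof (rule ccontr)
      assume "\<not> p i < p j"
      moreover have "p i \<noteq> p j" using ij invo by (metis less_irrefl)
      ultimately have "p j < p i" by simp
      moreover have "j < p j" "p j \<le> n" "1 \<le> i" using j i inr[of j] unfolding Op_def by auto
      ultimately show False using av ij invo[of j] unfolding avoids321_def by (metis)
    qed
  next
    fix i f assume i: "i \<in> Op n p" and f: "f \<in> Fx n p" and l: "i < f" "f < p i"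
    have "p i \<le> n" "1 \<le> i" using i inr[of i] unfolding Op_def by auto
    moreover have "p f = f" using f unfolding Fx_def by simp
    ultimately show False using av l invo[of i] unfolding avoids321_def by metis
  qed
qed

context invl begin

lemma inr: "x \<in> {1..n} \<Longrightarrow> p x \<in> {1..n}" using permutes_in_image[OF perm] by simp
lemma outside: "x \<notin> {1..n} \<Longrightarrow> p x = x" using permutes_not_in[OF perm] by simp
lemma pinj: "p x = p y \<Longrightarrow> x = y" using invo by metis

lemma OpCl: "q \<in> Op n p \<Longrightarrow> p q \<in> Cl n p"
  using inr invo unfolding Op_def Cl_def by auto
lemma ClOp: "c \<in> Cl n p \<Longrightarrow> p c \<in> Op n p"
  using inr invo unfolding Op_def Cl_def by auto

lemma partition: "x \<in> {1..n} \<Longrightarrow> x \<in> Op n p \<or> x \<in> Cl n p \<or> x \<in> Fx n p"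
  unfolding Op_def Cl_def Fx_def by auto

lemma fins: "finite (Op n p)" "finite (Cl n p)" "finite (Fx n p)"
  unfolding Op_def Cl_def Fx_def by auto

lemma bijOC: "bij_betw p (Op n p) (Cl n p)"
proof -
  have "p ` Op n p = Cl n p"
  proof (intro equalityI subsetI)
    fix y assume "y \<in> p ` Op n p" then show "y \<in> Cl n p" using OpCl by auto
  next
    fix y assume "y \<in> Cl n p" then have "p y \<in> Op n p" "p (p y) = y" using ClOp invo by auto
    then show "y \<in> p ` Op n p" by (metis imageI)
  qed
  moreover have "inj_on p (Op n p)" using pinj by (auto simp: inj_on_def)
  ultimately show ?thesis unfolding bij_betw_def by simp
qed

lemma cardOC: "card (Op n p) = card (Cl n p)"
  using bijOC by (rule bij_betw_same_card)

lemma card_parts: "card (Op n p) + card (Cl n p) + card (Fx n p) = n"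
proof -
  have "{1..n} = Op n p \<union> Cl n p \<union> Fx n p" unfolding Op_def Cl_def Fx_def by auto
  moreover have "Op n p \<inter> Cl n p = {}" "(Op n p \<union> Cl n p) \<inter> Fx n p = {}"
    unfolding Op_def Cl_def Fx_def by auto
  ultimately have "card {1..n} = card (Op n p) + card (Cl n p) + card (Fx n p)"
    using fins by (simp add: card_Un_disjoint)
  then show ?thesis by simp
qed

lemma desc_iff:
  assumes "1 \<le> i" "i < n"
  shows "p (Suc i) < p i \<longleftrightarrow> i \<in> Op n p \<and> Suc i \<in> Cl n p"
proof
  assume h: "i \<in> Op n p \<and> Suc i \<in> Cl n p"
  then show "p (Suc i) < p i" unfolding Op_def Cl_def by auto
next
  assume h: "p (Suc i) < p i"
  have i: "i \<in> {1..n}" and si: "Suc i \<in> {1..n}" using assms by auto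
  consider (O1) "i \<in> Op n p" | (C1) "i \<in> Cl n p" | (F1) "i \<in> Fx n p" using partition[OF i] by blast
  then show "i \<in> Op n p \<and> Suc i \<in> Cl n p"
  proof cases
    case O1
    consider (O2) "Suc i \<in> Op n p" | (C2) "Suc i \<in> Cl n p" | (F2) "Suc i \<in> Fx n p" using partition[OF si] by blast
    then show ?thesis
    proof cases
      case O2
      then show ?thesis using nonnest[OF O1 O2] h by simp
    next
      case C2 then show ?thesis using O1 by simp
    next
      case F2
      then have "p (Suc i) = Suc i" unfolding Fx_def by simp
      then show ?thesis using uncov[OF O1 F2] h by simp
    qed
  next
    case C1
    note 2 = C1
    then have "p i < i" unfolding Cl_def by simp
    then have sc: "Suc i \<in> Cl n p" using h si unfolding Cl_def by auto
    have "p (p (Suc i)) < p (p i)" using nonnest[OF ClOp[OF sc] ClOp[OF 2]] h by simp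
    then show ?thesis using invo by simp
  next
    case F1
    note 3 = F1
    then have pi: "p i = i" unfolding Fx_def by simp
    then have sc: "Suc i \<in> Cl n p" using h si unfolding Cl_def by auto
    have "p (Suc i) \<noteq> i" using pi invo by (metis n_not_Suc_n)
    then have "p (Suc i) < i" using h pi by simp
    moreover have "i < p (p (Suc i))" using invo by simp
    ultimately show ?thesis using uncov[OF ClOp[OF sc] 3] by simp
  qed
qed

lemma Fe_sub: "Fe a n p \<subseteq> Fx n p" unfolding Fe_def by auto

lemma Fe_down: "f \<in> Fe a n p \<Longrightarrow> g \<in> Fx n p \<Longrightarrow> g \<le> f \<Longrightarrow> g \<in> Fe a n p"
proof -
  assume f: "f \<in> Fe a n p" and g: "g \<in> Fx n p" "g \<le> f"
  have "rkb (Fx n p) g \<le> rkb (Fx n p) f" using g f Fe_sub fins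
    by (subst rkb_le_iff) auto
  then show ?thesis using f g unfolding Fe_def by auto
qed

lemma Fe_Fl: "f \<in> Fe a n p \<Longrightarrow> g \<in> Fx n p - Fe a n p \<Longrightarrow> f < g"
  using Fe_down by (metis DiffD1 DiffD2 not_le_imp_less)

lemma Des_peaks: "Des n p = peaks n (Phi a n p)"
proof -
  have "i \<in> Op n p \<and> Suc i \<in> Cl n p \<longleftrightarrow> i \<notin> Phi a n p \<and> Suc i \<in> Phi a n p"
    if i: "1 \<le> i" "i < n" for i
  proof
    assume h: "i \<in> Op n p \<and> Suc i \<in> Cl n p"
    then have "i \<notin> Fx n p" "i \<notin> Cl n p" unfolding Op_def Cl_def Fx_def by auto
    then have "i \<notin> Phi a n p" using Fe_sub unfolding Phi_def by auto
    then show "i \<notin> Phi a n p \<and> Suc i \<in> Phi a n p" using h unfolding Phi_def by auto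
  next
    assume h: "i \<notin> Phi a n p \<and> Suc i \<in> Phi a n p"
    have ii: "i \<in> {1..n}" and si: "Suc i \<in> {1..n}" using i by auto
    have A: "i \<in> Op n p \<or> i \<in> Fx n p - Fe a n p" using partition[OF ii] h unfolding Phi_def by auto
    have B: "Suc i \<in> Cl n p \<or> Suc i \<in> Fe a n p" using h unfolding Phi_def by auto
    show "i \<in> Op n p \<and> Suc i \<in> Cl n p"
    proof (cases "i \<in> Op n p")
      case True
      show ?thesis
      proof (rule ccontr)
        assume "\<not> ?thesis"
        then have f: "Suc i \<in> Fe a n p" using B True by simp
        then have fx: "Suc i \<in> Fx n p" using Fe_sub by auto
        then have "p (Suc i) = Suc i" unfolding Fx_def by simp
        then have "p i \<noteq> Suc i" using invo by (metis n_not_Suc_n)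
        then have "Suc i < p i" using True unfolding Op_def by auto
        then show False using uncov[OF True fx] by simp
      qed
    next
      case False
      then have fl: "i \<in> Fx n p - Fe a n p" using A by simp
      then have pi: "p i = i" unfolding Fx_def by simp
      show ?thesis
      proof (cases "Suc i \<in> Cl n p")
        case True
        have "p (Suc i) \<noteq> i" using pi invo by (metis n_not_Suc_n)
        moreover have "p (Suc i) < Suc i" using True unfolding Cl_def by simp
        ultimately have "p (Suc i) < i" by simp
        moreover have "i < p (p (Suc i))" using invo by simp
        ultimately show ?thesis using uncov[OF ClOp[OF True], of i] fl by simp
      next
        case False
        then have "Suc i \<in> Fe a n p" using B by simp
        then show ?thesis using Fe_Fl[OF _ fl] by fastforce
      qed
    qed
  qed
  then show ?thesis unfolding Des_def peaks_def using desc_iff by auto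
qed

end


definition opn :: "nat \<Rightarrow> (nat \<Rightarrow> nat) \<Rightarrow> nat \<Rightarrow> nat" where
  "opn n p q = card {i \<in> Op n p. i \<le> q \<and> q < p i}"
definition ee :: "nat set \<Rightarrow> nat \<Rightarrow> int" where
  "ee D q = int (zc D q) - int (yc D q)"
definition RL :: "nat set \<Rightarrow> nat set" where
  "RL D = {x \<in> D. \<forall>q<x. ee D x < ee D q}"
definition RU :: "nat \<Rightarrow> nat set \<Rightarrow> nat set" where
  "RU n D = {x \<in> {1..n} - D. \<forall>q. x \<le> q \<and> q \<le> n \<longrightarrow> ee D x \<le> ee D q}"

lemma yc_Un: "A \<inter> B = {} \<Longrightarrow> yc (A \<union> B) q = yc A q + yc B q"
proof -
  assume "A \<inter> B = {}"
  then have "(A \<inter> {1..q}) \<inter> (B \<inter> {1..q}) = {}" by auto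
  moreover have "(A \<union> B) \<inter> {1..q} = (A \<inter> {1..q}) \<union> (B \<inter> {1..q})" by auto
  ultimately show ?thesis unfolding yc_def by (simp add: card_Un_disjoint)
qed

context invl begin

lemma opn_eq: "yc (Op n p) q = yc (Cl n p) q + opn n p q"
proof -
  have e1: "Op n p \<inter> {1..q} = {i \<in> Op n p. p i \<le> q} \<union> {i \<in> Op n p. i \<le> q \<and> q < p i}"
    unfolding Op_def by auto
  have d1: "{i \<in> Op n p. p i \<le> q} \<inter> {i \<in> Op n p. i \<le> q \<and> q < p i} = {}" by auto
  have e2: "Cl n p \<inter> {1..q} = p ` {i \<in> Op n p. p i \<le> q}"
  proof (intro equalityI subsetI)
    fix c assume c: "c \<in> Cl n p \<inter> {1..q}"
    then have "p c \<in> Op n p" "p (p c) = c" using ClOp invo by auto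
    then show "c \<in> p ` {i \<in> Op n p. p i \<le> q}" using c by (intro image_eqI[where x="p c"]) auto
  next
    fix c assume "c \<in> p ` {i \<in> Op n p. p i \<le> q}"
    then obtain i where i: "i \<in> Op n p" "p i \<le> q" "c = p i" by auto
    then have "c \<in> Cl n p" using OpCl by simp
    moreover have "1 \<le> c" using \<open>c \<in> Cl n p\<close> unfolding Cl_def by simp
    ultimately show "c \<in> Cl n p \<inter> {1..q}" using i by simp
  qed
  have "card (p ` {i \<in> Op n p. p i \<le> q}) = card {i \<in> Op n p. p i \<le> q}"
    using pinj by (intro card_image) (auto simp: inj_on_def)
  then show ?thesis unfolding yc_def opn_def e1 e2
    using fins(1) by (subst card_Un_disjoint) (auto simp: d1)
qed

lemma opn_fix: "f \<in> Fx n p \<Longrightarrow> opn n p f = 0"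
proof -
  assume f: "f \<in> Fx n p"
  have "{i \<in> Op n p. i \<le> f \<and> f < p i} = {}"
  proof -
    have "\<not> (i \<in> Op n p \<and> i \<le> f \<and> f < p i)" for i
    proof
      assume h: "i \<in> Op n p \<and> i \<le> f \<and> f < p i"
      have "i \<noteq> f" using h f unfolding Op_def Fx_def by auto
      then show False using uncov[of i f] h f by simp
    qed
    then show ?thesis by blast
  qed
  then show ?thesis unfolding opn_def by (metis card.empty)
qed

lemma opn_fix1: "f \<in> Fx n p \<Longrightarrow> opn n p (f - 1) = 0"
proof -
  assume f: "f \<in> Fx n p"
  have "{i \<in> Op n p. i \<le> f - 1 \<and> f - 1 < p i} = {}"
  proof -
    have "\<not> (i \<in> Op n p \<and> i \<le> f - 1 \<and> f - 1 < p i)" for i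
    proof
      assume h: "i \<in> Op n p \<and> i \<le> f - 1 \<and> f - 1 < p i"
      have f1: "1 \<le> f" "p f = f" using f unfolding Fx_def by auto
      have "p i \<noteq> f"
      proof
        assume "p i = f"
        then have "i = f" using invo f1 by metis
        moreover have "i \<le> f - 1" using h by simp
        ultimately show False using f1 by linarith
      qed
      then have "f < p i" using h f1 by linarith
      moreover have "i < f" using h f1 by linarith
      ultimately show False using uncov[of i f] h f by simp
    qed
    then show ?thesis by blast
  qed
  then show ?thesis unfolding opn_def by (metis card.empty)
qed

lemma opn_0: "opn n p 0 = 0"
proof -
  have "{i \<in> Op n p. i \<le> 0 \<and> 0 < p i} = {}" unfolding Op_def by auto
  then show ?thesis unfolding opn_def by (metis card.empty)
qed

lemma opn_n: "opn n p n = 0"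
proof -
  have "{i \<in> Op n p. i \<le> n \<and> n < p i} = {}" using inr unfolding Op_def by fastforce
  then show ?thesis unfolding opn_def by (metis card.empty)
qed

lemma opn_op: "x \<in> Op n p \<Longrightarrow> 1 \<le> opn n p x"
proof -
  assume x: "x \<in> Op n p"
  then have "x \<in> {i \<in> Op n p. i \<le> x \<and> x < p i}" unfolding Op_def by auto
  moreover have "finite {i \<in> Op n p. i \<le> x \<and> x < p i}" using fins by simp
  ultimately have "0 < opn n p x" unfolding opn_def by (auto simp: card_gt_0_iff)
  then show ?thesis by simp
qed

abbreviation "Fl a \<equiv> Fx n p - Fe a n p"

lemma e_formula:
  assumes q: "q \<le> n"
  shows "ee (Phi a n p) q = int (opn n p q) + int (yc (Fl a) q) - int (yc (Fe a n p) q)"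
proof -
  have "Cl n p \<inter> Fe a n p = {}" using Fe_sub[of a] unfolding Cl_def Fx_def by force
  then have y: "yc (Phi a n p) q = yc (Cl n p) q + yc (Fe a n p) q"
    unfolding Phi_def by (rule yc_Un)
  have "{1..q} - Phi a n p = (Op n p \<inter> {1..q}) \<union> (Fl a \<inter> {1..q})"
  proof (intro equalityI subsetI)
    fix x assume x: "x \<in> {1..q} - Phi a n p"
    then have "x \<in> {1..n}" using q by auto
    then have "x \<in> Op n p \<or> x \<in> Cl n p \<or> x \<in> Fx n p" by (rule partition)
    then show "x \<in> (Op n p \<inter> {1..q}) \<union> (Fl a \<inter> {1..q})" using x unfolding Phi_def by auto
  next
    fix x assume x: "x \<in> (Op n p \<inter> {1..q}) \<union> (Fl a \<inter> {1..q})"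
    have "x \<notin> Cl n p" using x unfolding Op_def Cl_def Fx_def by auto
    moreover have "x \<notin> Fe a n p" using x Fe_sub[of a] unfolding Op_def Fx_def by auto
    ultimately show "x \<in> {1..q} - Phi a n p" using x unfolding Phi_def by auto
  qed
  moreover have "(Op n p \<inter> {1..q}) \<inter> (Fl a \<inter> {1..q}) = {}" unfolding Op_def Fx_def by auto
  ultimately have z: "zc (Phi a n p) q = yc (Op n p) q + yc (Fl a) q"
    unfolding zc_def yc_def by (simp add: card_Un_disjoint)
  show ?thesis unfolding ee_def y z opn_eq by simp
qed

lemma yc_Fl_zero: "f \<in> Fe a n p \<Longrightarrow> yc (Fl a) f = 0"
proof -
  assume f: "f \<in> Fe a n p"
  have "Fl a \<inter> {1..f} = {}" using Fe_Fl[OF f] by fastforce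
  then show ?thesis unfolding yc_def by simp
qed

lemma RL_Phi: "RL (Phi a n p) = Fe a n p"
proof (intro equalityI subsetI)
  fix x assume x: "x \<in> RL (Phi a n p)"
  then have xD: "x \<in> Phi a n p" and lt: "\<And>q. q < x \<Longrightarrow> ee (Phi a n p) x < ee (Phi a n p) q"
    unfolding RL_def by auto
  show "x \<in> Fe a n p"
  proof (rule ccontr)
    assume "x \<notin> Fe a n p"
    then have xc: "x \<in> Cl n p" using xD unfolding Phi_def by simp
    then have x1: "1 \<le> x" "x \<le> n" unfolding Cl_def by auto
    have xnf: "x \<notin> Fx n p" using xc unfolding Cl_def Fx_def by auto
    define S where "S = Fx n p \<inter> {..<x}"
    define q0 where "q0 = (if S = {} then 0 else Max S)"
    have finS: "finite S" unfolding S_def by simp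
    have q0x: "q0 < x" using x1 finS unfolding q0_def S_def by (auto)
    have o0: "opn n p q0 = 0"
    proof (cases "S = {}")
      case True then show ?thesis unfolding q0_def using opn_0 by simp
    next
      case False
      then have "q0 \<in> S" unfolding q0_def using finS by simp
      then show ?thesis using opn_fix unfolding S_def by simp
    qed
    have nof: "\<And>z. q0 < z \<Longrightarrow> z \<le> x \<Longrightarrow> z \<notin> Fx n p"
    proof -
      fix z assume z: "q0 < z" "z \<le> x"
      show "z \<notin> Fx n p"
      proof
        assume zf: "z \<in> Fx n p"
        then have "z \<noteq> x" using xnf by auto
        then have "z \<in> S" using zf z unfolding S_def by simp
        then have "z \<le> q0" unfolding q0_def using finS by auto
        then show False using z by simp
      qed
    qed
    have "yc (Fl a) x = yc (Fl a) q0" using nof q0x by (intro yc_const) auto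
    moreover have "yc (Fe a n p) x = yc (Fe a n p) q0" using nof q0x Fe_sub by (intro yc_const) auto
    ultimately have "ee (Phi a n p) q0 \<le> ee (Phi a n p) x"
      using e_formula[of x a] e_formula[of q0 a] x1 q0x o0 by simp
    then show False using lt[OF q0x] by simp
  qed
next
  fix f assume f: "f \<in> Fe a n p"
  have fx: "f \<in> Fx n p" using f Fe_sub by auto
  then have f1: "1 \<le> f" "f \<le> n" unfolding Fx_def by auto
  have "ee (Phi a n p) f < ee (Phi a n p) q" if q: "q < f" for q
  proof -
    have "yc (Fe a n p) f = yc (Fe a n p) q + card (Fe a n p \<inter> {q<..f})"
      using q by (intro yc_interval) simp
    moreover have "f \<in> Fe a n p \<inter> {q<..f}" using f q by simp
    moreover have "finite (Fe a n p \<inter> {q<..f})" by simp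
    ultimately have "yc (Fe a n p) q < yc (Fe a n p) f"
      by (metis card_gt_0_iff empty_iff less_add_same_cancel1)
    moreover have "ee (Phi a n p) f = - int (yc (Fe a n p) f)"
      using e_formula[of f a] f1 opn_fix[OF fx] yc_Fl_zero[OF f] by simp
    moreover have "ee (Phi a n p) q \<ge> - int (yc (Fe a n p) q)"
      using e_formula[of q a] f1 q by simp
    ultimately show ?thesis by simp
  qed
  then show "f \<in> RL (Phi a n p)" using f unfolding RL_def Phi_def by auto
qed

lemma RU_Phi: "RU n (Phi a n p) = Fl a"
proof (intro equalityI subsetI)
  fix x assume x: "x \<in> RU n (Phi a n p)"
  then have xD: "x \<in> {1..n}" "x \<notin> Phi a n p"
    and ge: "\<And>q. x \<le> q \<Longrightarrow> q \<le> n \<Longrightarrow> ee (Phi a n p) x \<le> ee (Phi a n p) q"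
    unfolding RU_def by auto
  show "x \<in> Fl a"
  proof (rule ccontr)
    assume "x \<notin> Fl a"
    then have xo: "x \<in> Op n p" using partition[OF xD(1)] xD(2) unfolding Phi_def by auto
    define T where "T = {f \<in> Fx n p. x < f}"
    define q1 where "q1 = (if T = {} then n else Min T - 1)"
    have finT: "finite T" unfolding T_def using fins by simp
    have Tx: "T \<noteq> {} \<Longrightarrow> Min T \<in> T" using finT by simp
    have xq: "x \<le> q1" "q1 \<le> n"
    proof -
      show "x \<le> q1"
      proof (cases "T = {}")
        case True then show ?thesis using xD unfolding q1_def by simp
      next
        case False then show ?thesis using Tx unfolding q1_def T_def by auto
      qed
      show "q1 \<le> n"
      proof (cases "T = {}")
        case True then show ?thesis unfolding q1_def by simp
      next
        case False then have "Min T \<le> n" using Tx unfolding T_def Fx_def by auto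
        then show ?thesis using False unfolding q1_def by simp
      qed
    qed
    have o1: "opn n p q1 = 0"
    proof (cases "T = {}")
      case True then have "q1 = n" unfolding q1_def by simp
      then show ?thesis using opn_n by simp
    next
      case False then have "q1 = Min T - 1" unfolding q1_def by simp
      moreover have "Min T \<in> Fx n p" using Tx[OF False] unfolding T_def by simp
      ultimately show ?thesis using opn_fix1 by simp
    qed
    have nof: "\<And>z. x < z \<Longrightarrow> z \<le> q1 \<Longrightarrow> z \<notin> Fx n p"
    proof -
      fix z assume z: "x < z" "z \<le> q1"
      show "z \<notin> Fx n p"
      proof
        assume zf: "z \<in> Fx n p"
        then have "z \<in> T" using z unfolding T_def by simp
        then have "T \<noteq> {}" "Min T \<le> z" using finT by auto
        then show False using z unfolding q1_def by simp
      qed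
    qed
    have "yc (Fl a) q1 = yc (Fl a) x" using nof xq by (intro yc_const) auto
    moreover have "yc (Fe a n p) q1 = yc (Fe a n p) x" using nof xq Fe_sub by (intro yc_const) auto
    moreover have "1 \<le> opn n p x" using xo by (rule opn_op)
    ultimately have "ee (Phi a n p) q1 < ee (Phi a n p) x"
      using e_formula[of x a] e_formula[of q1 a] xD xq o1 by simp
    then show False using ge[OF xq] by simp
  qed
next
  fix g assume g: "g \<in> Fl a"
  then have gx: "g \<in> Fx n p" and gnf: "g \<notin> Fe a n p" by auto
  then have g1: "g \<in> {1..n}" unfolding Fx_def by auto
  have gnD: "g \<notin> Phi a n p" using gx gnf unfolding Phi_def Cl_def Fx_def by auto
  have "ee (Phi a n p) g \<le> ee (Phi a n p) q" if q: "g \<le> q" "q \<le> n" for q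
  proof -
    have "yc (Fe a n p) q = yc (Fe a n p) g"
      using Fe_Fl[OF _ g] q by (intro yc_const) fastforce+
    moreover have "yc (Fl a) g \<le> yc (Fl a) q" using q by (intro yc_mono)
    ultimately show ?thesis using e_formula[of q a] e_formula[of g a] q g1 opn_fix[OF gx] by simp
  qed
  then show "g \<in> RU n (Phi a n p)" using g1 gnD unfolding RU_def by auto
qed

lemma Cl_Phi: "Cl n p = Phi a n p - RL (Phi a n p)"
proof -
  have d: "Cl n p \<inter> Fe a n p = {}" using Fe_sub[of a] unfolding Cl_def Fx_def by force
  have "RL (Phi a n p) = Fe a n p" by (rule RL_Phi)
  then show ?thesis using d unfolding Phi_def by auto
qed

lemma Op_Phi: "Op n p = {1..n} - Phi a n p - RU n (Phi a n p)"
proof (intro equalityI subsetI)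
  fix x assume x: "x \<in> Op n p"
  then have "x \<notin> Fx n p" "x \<notin> Cl n p" "x \<in> {1..n}" unfolding Op_def Cl_def Fx_def by auto
  moreover have "RU n (Phi a n p) = Fl a" by (rule RU_Phi)
  ultimately show "x \<in> {1..n} - Phi a n p - RU n (Phi a n p)" unfolding Phi_def using Fe_sub[of a] by auto
next
  fix x assume x: "x \<in> {1..n} - Phi a n p - RU n (Phi a n p)"
  moreover have "RU n (Phi a n p) = Fl a" by (rule RU_Phi)
  ultimately have "x \<in> {1..n}" "x \<notin> Cl n p" "x \<notin> Fx n p" unfolding Phi_def by auto
  then show "x \<in> Op n p" using partition by blast
qed

lemma rank_match: "x \<in> Op n p \<Longrightarrow> rkb (Cl n p) (p x) = rkb (Op n p) x"
proof -
  assume x: "x \<in> Op n p"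
  have "{c \<in> Cl n p. c \<le> p x} = p ` {y \<in> Op n p. y \<le> x}"
  proof (intro equalityI subsetI)
    fix c assume c: "c \<in> {c \<in> Cl n p. c \<le> p x}"
    then have pc: "p c \<in> Op n p" "p (p c) = c" using ClOp invo by auto
    have "p c \<le> x"
    proof (rule ccontr)
      assume "\<not> p c \<le> x"
      then have "p x < p (p c)" using nonnest[OF x pc(1)] by simp
      then show False using c pc by simp
    qed
    then show "c \<in> p ` {y \<in> Op n p. y \<le> x}" using pc by (intro image_eqI[where x="p c"]) auto
  next
    fix c assume "c \<in> p ` {y \<in> Op n p. y \<le> x}"
    then obtain y where y: "y \<in> Op n p" "y \<le> x" "c = p y" by auto
    have "p y \<le> p x" using nonnest[OF y(1) x] y by (cases "y = x") auto
    then show "c \<in> {c \<in> Cl n p. c \<le> p x}" using OpCl[OF y(1)] y by simp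
  qed
  moreover have "inj_on p {y \<in> Op n p. y \<le> x}" using pinj by (auto simp: inj_on_def)
  ultimately show ?thesis unfolding rkb_def by (simp add: card_image)
qed

end

lemma invl_eq:
  assumes P: "invl n p" and Q: "invl n q" and eo: "Op n p = Op n q" and ec: "Cl n p = Cl n q"
  shows "p = q"
proof (rule ext)
  interpret P: invl n p by (rule P)
  interpret Q: invl n q by (rule Q)
  have op: "p x = q x" if x: "x \<in> Op n p" for x
  proof -
    have "rkb (Cl n p) (p x) = rkb (Cl n p) (q x)"
      using P.rank_match[OF x] Q.rank_match x eo ec by simp
    moreover have "p x \<in> Cl n p" "q x \<in> Cl n p" using P.OpCl[OF x] Q.OpCl x eo ec by auto
    ultimately have "p x \<le> q x" "q x \<le> p x"
      using rkb_le_iff[OF P.fins(2), of "p x" "q x"] rkb_le_iff[OF P.fins(2), of "q x" "p x"] by simp_all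
    then show ?thesis by simp
  qed
  fix x
  show "p x = q x"
  proof (cases "x \<in> {1..n}")
    case False then show ?thesis using P.outside Q.outside by simp
  next
    case True
    consider "x \<in> Op n p" | "x \<in> Cl n p" | "x \<in> Fx n p" using P.partition[OF True] by blast
    then show ?thesis
    proof cases
      case 1 then show ?thesis by (rule op)
    next
      case 2
      then have y: "p x \<in> Op n p" using P.ClOp by simp
      then have qp: "q (p x) = x" using op[OF y] P.invo by simp
      have "q (q (p x)) = p x" by (rule Q.invo)
      then have "q x = p x" using qp by simp
      then show ?thesis by simp
    next
      case 3
      then have "x \<notin> Op n p" "x \<notin> Cl n p" unfolding Op_def Cl_def Fx_def by auto
      then have "x \<notin> Op n q" "x \<notin> Cl n q" using eo ec by simp_all
      then have "x \<in> Fx n q" using Q.partition[OF True] by auto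
      then show ?thesis using 3 unfolding Fx_def by simp
    qed
  qed
qed

lemma Phi_inj:
  assumes P: "invl n p" and Q: "invl n q" and e: "Phi a n p = Phi a n q"
  shows "p = q"
proof (rule invl_eq[OF P Q])
  show "Op n p = Op n q" using invl.Op_Phi[OF P, of a] invl.Op_Phi[OF Q, of a] e by simp
  show "Cl n p = Cl n q" using invl.Cl_Phi[OF P, of a] invl.Cl_Phi[OF Q, of a] e by simp
qed


lemma invl_avoids: "invl n p \<Longrightarrow> avoids321 p n"
proof -
  assume P: "invl n p"
  interpret invl n p by (rule P)
  show ?thesis unfolding avoids321_def
  proof (rule notI, elim exE conjE)
    fix i j k assume h: "1 \<le> i" "i < j" "j < k" "k \<le> n" "p j < p i" "p k < p j"
    have jn: "j \<in> {1..n}" using h by auto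
    have "i \<in> {1..n}" "k \<in> {1..n}" using h by auto
    consider "j \<in> Op n p" | "j \<in> Cl n p" | "j \<in> Fx n p" using partition[OF jn] by blast
    then show False
    proof cases
      case 1
      then have "j < p j" unfolding Op_def by simp
      then have "i \<in> Op n p" using h \<open>i \<in> {1..n}\<close> unfolding Op_def by auto
      then show False using nonnest[OF _ 1 h(2)] h by simp
    next
      case 2
      then have "p j < j" unfolding Cl_def by simp
      then have kc: "k \<in> Cl n p" using h \<open>k \<in> {1..n}\<close> unfolding Cl_def by auto
      have "p (p k) < p (p j)" using nonnest[OF ClOp[OF kc] ClOp[OF 2]] h by simp
      then show False using invo h by simp
    next
      case 3
      then have pj: "p j = j" unfolding Fx_def by simp
      then have "i \<in> Op n p" using h \<open>i \<in> {1..n}\<close> unfolding Op_def by auto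
      then show False using uncov[OF _ 3] h pj by auto
    qed
  qed
qed

lemma fp_Fx: "fp n p = card (Fx n p)"
  unfolding fp_def Fx_def by simp

context invl begin

lemma card_Fx: "card (Fx n p) = n - 2 * card (Cl n p)"
  using card_parts cardOC by simp

lemma card_Fe:
  assumes "a - card (Cl n p) \<le> card (Fx n p)"
  shows "card (Fe a n p) = a - card (Cl n p)"
proof -
  let ?t = "a - card (Cl n p)"
  have bij: "bij_betw (rkb (Fx n p)) (Fx n p) {1..card (Fx n p)}" by (rule rkb_bij[OF fins(3)])
  have "bij_betw (rkb (Fx n p)) (Fe a n p) {1..?t}"
  proof -
    have inj: "inj_on (rkb (Fx n p)) (Fe a n p)"
      using bij Fe_sub unfolding bij_betw_def by (auto intro: inj_on_subset)
    have "rkb (Fx n p) ` Fe a n p = {1..?t}"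
    proof (intro equalityI subsetI)
      fix t assume "t \<in> rkb (Fx n p) ` Fe a n p"
      then obtain f where f: "f \<in> Fe a n p" "t = rkb (Fx n p) f" by auto
      have "f \<in> Fx n p" using f(1) Fe_sub[of a] by auto
      then have "t \<in> rkb (Fx n p) ` Fx n p" using f(2) by simp
      then have "t \<in> {1..card (Fx n p)}" using bij unfolding bij_betw_def by simp
      then show "t \<in> {1..?t}" using f unfolding Fe_def by auto
    next
      fix t assume t: "t \<in> {1..?t}"
      then have "t \<in> {1..card (Fx n p)}" using assms by auto
      then have "t \<in> rkb (Fx n p) ` Fx n p" using bij unfolding bij_betw_def by simp
      then obtain f where f: "f \<in> Fx n p" "t = rkb (Fx n p) f" by auto
      then have "f \<in> Fe a n p" using t unfolding Fe_def by auto
      then show "t \<in> rkb (Fx n p) ` Fe a n p" using f by auto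
    qed
    then show ?thesis using inj unfolding bij_betw_def by simp
  qed
  then show ?thesis using bij_betw_same_card by fastforce
qed

lemma Phi_words:
  assumes ab: "a \<le> b" and n: "n = a + b" and k: "card (Cl n p) \<le> a"
  shows "Phi a n p \<in> words a b"
proof -
  have "a - card (Cl n p) \<le> card (Fx n p)" using card_Fx ab n k by simp
  then have cf: "card (Fe a n p) = a - card (Cl n p)" by (rule card_Fe)
  have d: "Cl n p \<inter> Fe a n p = {}" using Fe_sub[of a] unfolding Cl_def Fx_def by force
  have "card (Phi a n p) = a" unfolding Phi_def using d cf k fins Fe_sub[of a]
    by (subst card_Un_disjoint) (auto intro: finite_subset)
  moreover have "Phi a n p \<subseteq> {1..a+b}" unfolding Phi_def using Fe_sub[of a] n unfolding Cl_def Fx_def by auto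
  ultimately show ?thesis unfolding words_def by simp
qed

end

definition LHS :: "nat \<Rightarrow> nat \<Rightarrow> (nat \<Rightarrow> nat) set" where
  "LHS a b = {p \<in> inv321 (a + b). fp (a + b) p \<ge> b - a}"

lemma LHS_invl: "p \<in> LHS a b \<Longrightarrow> invl (a + b) p"
  unfolding LHS_def using inv321_invl by blast

lemma LHS_k: assumes "a \<le> b" "p \<in> LHS a b" shows "card (Cl (a + b) p) \<le> a"
proof -
  interpret invl "a + b" p using LHS_invl[OF assms(2)] .
  have "fp (a + b) p \<ge> b - a" using assms(2) unfolding LHS_def by simp
  moreover have "2 * card (Cl (a + b) p) \<le> a + b" using card_parts cardOC by simp
  ultimately show ?thesis using card_Fx fp_Fx[of "a+b" p] assms(1) by simp
qed

lemma Phi_LHS_words: "a \<le> b \<Longrightarrow> p \<in> LHS a b \<Longrightarrow> Phi a (a + b) p \<in> words a b"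
  using invl.Phi_words[OF LHS_invl] LHS_k by blast

lemma Phi_LHS_inj: "inj_on (Phi a (a + b)) (LHS a b)"
  by (intro inj_onI) (auto intro: Phi_inj LHS_invl)

lemma LHS_Des: "p \<in> LHS a b \<Longrightarrow> Des (a + b) p = peaks (a + b) (Phi a (a + b) p)"
  using invl.Des_peaks[OF LHS_invl] by blast


lemma ee_Suc: "ee D (Suc q) = ee D q + (if Suc q \<in> D then -1 else 1)"
  unfolding ee_def using yc_Suc[of D q] zc_Suc[of D q] by auto

lemma ee_0: "ee D 0 = 0" unfolding ee_def yc_def zc_def by simp

locale wd =
  fixes a b :: nat and D :: "nat set"
  assumes Dw: "D \<in> words a b"
begin

abbreviation "n \<equiv> a + b"

lemma Dsub: "D \<subseteq> {1..n}" and cD: "card D = a" using Dw unfolding words_def by auto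
lemma finD: "finite D" using Dsub finite_subset by blast

definition mpre where "mpre q = Min (ee D ` {..q})"
definition msuf where "msuf q = Min (ee D ` {q..n})"

lemma mpre_le: "r \<le> q \<Longrightarrow> mpre q \<le> ee D r"
  unfolding mpre_def by (intro Min_le) auto
lemma mpre_ex: "\<exists>r\<le>q. mpre q = ee D r"
proof -
  have "mpre q \<in> ee D ` {..q}" unfolding mpre_def by (intro Min_in) auto
  then show ?thesis by auto
qed
lemma mpre_0: "mpre 0 = 0" unfolding mpre_def using ee_0 by simp
lemma mpre_Suc: "mpre (Suc q) = min (mpre q) (ee D (Suc q))"
proof -
  have "{..Suc q} = insert (Suc q) {..q}" by auto
  then have "ee D ` {..Suc q} = insert (ee D (Suc q)) (ee D ` {..q})" by auto
  then show ?thesis unfolding mpre_def by (simp add: Min_insert min.commute)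
qed

lemma msuf_le: "q \<le> r \<Longrightarrow> r \<le> n \<Longrightarrow> msuf q \<le> ee D r"
  unfolding msuf_def by (intro Min_le) auto
lemma msuf_n: "msuf n = ee D n" unfolding msuf_def by simp
lemma msuf_step: "q < n \<Longrightarrow> msuf q = min (ee D q) (msuf (Suc q))"
proof -
  assume q: "q < n"
  have "{q..n} = insert q {Suc q..n}" using q by auto
  then have "ee D ` {q..n} = insert (ee D q) (ee D ` {Suc q..n})" by auto
  moreover have "{Suc q..n} \<noteq> {}" using q by auto
  ultimately show ?thesis unfolding msuf_def by (simp add: Min_insert)
qed
lemma msuf_tot: "q \<le> n \<Longrightarrow> msuf 0 = min (mpre q) (msuf q)"
proof -
  assume q: "q \<le> n"
  have "{0..n} = {..q} \<union> {q..n}" using q by auto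
  then have "ee D ` {0..n} = ee D ` {..q} \<union> ee D ` {q..n}" by auto
  moreover have "ee D ` {..q} \<noteq> {}" "ee D ` {q..n} \<noteq> {}" using q by auto
  ultimately show ?thesis unfolding msuf_def mpre_def by (simp add: Min_Un)
qed

lemma RL_Suc: "Suc q \<in> RL D \<longleftrightarrow> Suc q \<in> D \<and> ee D (Suc q) < mpre q"
proof
  assume h: "Suc q \<in> RL D"
  obtain r where r: "r \<le> q" "mpre q = ee D r" using mpre_ex by blast
  then show "Suc q \<in> D \<and> ee D (Suc q) < mpre q" using h unfolding RL_def by auto
next
  assume h: "Suc q \<in> D \<and> ee D (Suc q) < mpre q"
  have "ee D (Suc q) < ee D r" if "r < Suc q" for r
    using h mpre_le[of r q] that by simp
  then show "Suc q \<in> RL D" using h unfolding RL_def by auto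
qed

lemma RL_sub: "RL D \<subseteq> D" unfolding RL_def by auto
lemma RU_sub: "RU n D \<subseteq> {1..n} - D" unfolding RU_def by auto

lemma cRL: "int (card (RL D \<inter> {1..q})) = - mpre q"
proof (induction q)
  case 0 then show ?case using mpre_0 by simp
next
  case (Suc q)
  have split: "RL D \<inter> {1..Suc q} = (RL D \<inter> {1..q}) \<union> (RL D \<inter> {Suc q})" by auto
  have fin: "finite (RL D \<inter> {1..q})" by simp
  have ep: "mpre q \<le> ee D q" using mpre_le by simp
  show ?case
  proof (cases "Suc q \<in> RL D")
    case True
    then have "Suc q \<in> D" "ee D (Suc q) < mpre q" using RL_Suc by auto
    then have "ee D (Suc q) = mpre q - 1" using ee_Suc[of D q] ep by simp
    then have m: "mpre (Suc q) = mpre q - 1" using mpre_Suc by simp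
    have "card (RL D \<inter> {1..Suc q}) = card (RL D \<inter> {1..q}) + 1"
      unfolding split using True fin by (simp add: card_insert_if)
    then show ?thesis using Suc.IH m by simp
  next
    case False
    have "mpre q \<le> ee D (Suc q)"
    proof (cases "Suc q \<in> D")
      case True then show ?thesis using False RL_Suc by simp
    next
      case False then show ?thesis using ee_Suc[of D q] ep by simp
    qed
    then have m: "mpre (Suc q) = mpre q" using mpre_Suc by simp
    have "RL D \<inter> {1..Suc q} = RL D \<inter> {1..q}" using split False by auto
    then show ?thesis using Suc.IH m by simp
  qed
qed

lemma RU_Suc: "q < n \<Longrightarrow> Suc q \<in> RU n D \<longleftrightarrow> Suc q \<notin> D \<and> ee D (Suc q) \<le> msuf (Suc q)"
proof
  assume q: "q < n" and h: "Suc q \<in> RU n D"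
  have "msuf (Suc q) \<in> ee D ` {Suc q..n}" unfolding msuf_def using q by (intro Min_in) auto
  then obtain r where "Suc q \<le> r" "r \<le> n" "msuf (Suc q) = ee D r" by auto
  then show "Suc q \<notin> D \<and> ee D (Suc q) \<le> msuf (Suc q)" using h unfolding RU_def by auto
next
  assume q: "q < n" and h: "Suc q \<notin> D \<and> ee D (Suc q) \<le> msuf (Suc q)"
  have "ee D (Suc q) \<le> ee D r" if "Suc q \<le> r" "r \<le> n" for r
    using h msuf_le[OF that] by simp
  then show "Suc q \<in> RU n D" using h q unfolding RU_def by auto
qed

lemma cRU: "q \<le> n \<Longrightarrow> int (card (RU n D \<inter> {q<..n})) = ee D n - msuf q"
proof (induction "n - q" arbitrary: q)
  case 0
  then have "q = n" by simp
  then show ?case using msuf_n by simp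
next
  case (Suc k)
  then have q: "q < n" and k: "k = n - Suc q" by auto
  have IH: "int (card (RU n D \<inter> {Suc q<..n})) = ee D n - msuf (Suc q)"
    using Suc.hyps(1)[OF k] q by simp
  have split: "RU n D \<inter> {q<..n} = (RU n D \<inter> {Suc q<..n}) \<union> (RU n D \<inter> {Suc q})" using q by auto
  have fin: "finite (RU n D \<inter> {Suc q<..n})" by simp
  have es: "msuf (Suc q) \<le> ee D (Suc q)" using q by (intro msuf_le) auto
  have st: "msuf q = min (ee D q) (msuf (Suc q))" by (rule msuf_step[OF q])
  show ?case
  proof (cases "Suc q \<in> RU n D")
    case True
    then have "Suc q \<notin> D" "ee D (Suc q) \<le> msuf (Suc q)" using RU_Suc[OF q] by auto
    then have "ee D q = msuf (Suc q) - 1" using ee_Suc[of D q] es by simp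
    then have m: "msuf q = msuf (Suc q) - 1" using st by simp
    have "card (RU n D \<inter> {q<..n}) = card (RU n D \<inter> {Suc q<..n}) + 1"
      unfolding split using True fin by (simp add: card_insert_if)
    then show ?thesis using IH m by simp
  next
    case False
    have "msuf (Suc q) \<le> ee D q"
    proof (cases "Suc q \<in> D")
      case True then show ?thesis using ee_Suc[of D q] es by simp
    next
      case nd: False
      then have "msuf (Suc q) < ee D (Suc q)" using False RU_Suc[OF q] es by simp
      then show ?thesis using ee_Suc[of D q] nd by simp
    qed
    then have m: "msuf q = msuf (Suc q)" using st by simp
    have "RU n D \<inter> {q<..n} = RU n D \<inter> {Suc q<..n}" using split False by auto
    then show ?thesis using IH m by simp
  qed
qed

definition OpD where "OpD = {1..n} - D - RU n D"
definition ClD where "ClD = D - RL D"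

lemma G: "q \<le> n \<Longrightarrow> int (yc OpD q) - int (yc ClD q) = ee D q - max (mpre q) (msuf q)"
proof -
  assume q: "q \<le> n"
  have c1: "yc ClD q + card (RL D \<inter> {1..q}) = yc D q"
  proof -
    have "D \<inter> {1..q} = (ClD \<inter> {1..q}) \<union> (RL D \<inter> {1..q})" unfolding ClD_def using RL_sub by auto
    moreover have "(ClD \<inter> {1..q}) \<inter> (RL D \<inter> {1..q}) = {}" unfolding ClD_def by auto
    ultimately show ?thesis unfolding yc_def by (simp add: card_Un_disjoint)
  qed
  have c2: "yc OpD q + card (RU n D \<inter> {1..q}) = zc D q"
  proof -
    have "{1..q} - D = (OpD \<inter> {1..q}) \<union> (RU n D \<inter> {1..q})" unfolding OpD_def using RU_sub q by auto
    moreover have "(OpD \<inter> {1..q}) \<inter> (RU n D \<inter> {1..q}) = {}" unfolding OpD_def by auto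
    ultimately show ?thesis unfolding yc_def zc_def by (simp add: card_Un_disjoint)
  qed
  have c3: "card (RU n D \<inter> {1..q}) + card (RU n D \<inter> {q<..n}) = card (RU n D \<inter> {0<..n})"
  proof -
    have "RU n D \<inter> {0<..n} = (RU n D \<inter> {1..q}) \<union> (RU n D \<inter> {q<..n})" using q by auto
    moreover have "(RU n D \<inter> {1..q}) \<inter> (RU n D \<inter> {q<..n}) = {}" by auto
    ultimately show ?thesis by (simp add: card_Un_disjoint)
  qed
  have "int (card (RU n D \<inter> {0<..n})) = ee D n - msuf 0" using cRU[of 0] by simp
  moreover have "int (card (RU n D \<inter> {q<..n})) = ee D n - msuf q" using cRU[OF q] .
  moreover have "int (card (RL D \<inter> {1..q})) = - mpre q" by (rule cRL)
  moreover have "msuf 0 = min (mpre q) (msuf q)" by (rule msuf_tot[OF q])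
  ultimately show ?thesis using c1 c2 c3 unfolding ee_def by linarith
qed

lemma ballot: "q \<le> n \<Longrightarrow> yc ClD q \<le> yc OpD q"
proof -
  assume q: "q \<le> n"
  have "mpre q \<le> ee D q" "msuf q \<le> ee D q" using mpre_le msuf_le q by auto
  then show ?thesis using G[OF q] by linarith
qed

lemma card_eq: "card OpD = card ClD"
proof -
  have "mpre n \<le> ee D n" using mpre_le by simp
  then have "int (yc OpD n) - int (yc ClD n) = 0" using G[of n] msuf_n by simp
  moreover have "OpD \<subseteq> {1..n}" "ClD \<subseteq> {1..n}" unfolding OpD_def ClD_def using Dsub by auto
  ultimately show ?thesis using yc_full by (metis eq_iff_diff_eq_0 of_nat_eq_iff)
qed

lemma RL_bal: "f \<in> RL D \<Longrightarrow> yc OpD (f - 1) = yc ClD (f - 1)"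
proof -
  assume f: "f \<in> RL D"
  then have fD: "f \<in> D" using RL_sub by auto
  then have f1: "1 \<le> f" "f \<le> n" using Dsub by auto
  obtain q where fq: "f = Suc q" using f1 by (cases f) auto
  have "ee D f < mpre q" using f RL_Suc fq by simp
  moreover have "ee D f = ee D q - 1" using ee_Suc[of D q] fD fq by simp
  moreover have "mpre q \<le> ee D q" using mpre_le by simp
  moreover have "msuf q \<le> ee D q" using msuf_le f1 fq by simp
  ultimately have "int (yc OpD q) - int (yc ClD q) = 0" using G[of q] f1 fq by simp
  then show ?thesis using fq by simp
qed

lemma RU_bal: "f \<in> RU n D \<Longrightarrow> yc OpD (f - 1) = yc ClD (f - 1)"
proof -
  assume f: "f \<in> RU n D"
  then have fD: "f \<notin> D" "1 \<le> f" "f \<le> n" using RU_sub by auto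
  obtain q where fq: "f = Suc q" using fD by (cases f) auto
  have q: "q < n" using fD fq by simp
  have "ee D f \<le> msuf f" using f RU_Suc[OF q] fq by simp
  moreover have "ee D f = ee D q + 1" using ee_Suc[of D q] fD fq by simp
  moreover have "msuf q = min (ee D q) (msuf f)" using msuf_step[OF q] fq by simp
  moreover have "mpre q \<le> ee D q" using mpre_le by simp
  ultimately have "int (yc OpD q) - int (yc ClD q) = 0" using G[of q] q by simp
  then show ?thesis using fq by simp
qed

lemma RL_RU: "f \<in> RL D \<Longrightarrow> u \<in> RU n D \<Longrightarrow> f < u"
proof (rule ccontr)
  assume f: "f \<in> RL D" and u: "u \<in> RU n D" and "\<not> f < u"
  then have uf: "u \<le> f" by simp
  have "u \<noteq> f" using f u RL_sub RU_sub by auto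
  then have uf': "u < f" using uf by simp
  have fD: "f \<le> n" using f RL_sub Dsub by auto
  have u1: "1 \<le> u" "u \<notin> D" using u RU_sub by auto
  obtain q where uq: "u = Suc q" using u1 by (cases u) auto
  have "ee D u \<le> ee D f" using u uf fD unfolding RU_def by auto
  moreover have "ee D u = ee D q + 1" using ee_Suc[of D q] u1 uq by simp
  moreover have "ee D f < ee D q" using f uq uf' unfolding RL_def by auto
  ultimately show False by simp
qed

lemma card_RL: "card (RL D) + card ClD = a"
proof -
  have "D = ClD \<union> RL D" "ClD \<inter> RL D = {}" unfolding ClD_def using RL_sub by auto
  then have "card D = card ClD + card (RL D)" using finD by (metis card_Un_disjoint finite_Un)
  then show ?thesis using cD by simp
qed

end


definition mt :: "nat set \<Rightarrow> nat set \<Rightarrow> nat \<Rightarrow> nat" where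
  "mt Os Cs x = (if x \<in> Os then (THE c. c \<in> Cs \<and> rkb Cs c = rkb Os x)
              else if x \<in> Cs then (THE y. y \<in> Os \<and> rkb Os y = rkb Cs x) else x)"

lemma rkb_unique:
  assumes "finite S" "t \<in> {1..card S}"
  shows "\<exists>!x. x \<in> S \<and> rkb S x = t"
proof -
  have bij: "bij_betw (rkb S) S {1..card S}" by (rule rkb_bij[OF assms(1)])
  then obtain x where "x \<in> S" "rkb S x = t" using assms(2) unfolding bij_betw_def by (metis imageE)
  moreover have "\<And>y. y \<in> S \<Longrightarrow> rkb S y = t \<Longrightarrow> y = x"
    using bij \<open>x \<in> S\<close> \<open>rkb S x = t\<close> unfolding bij_betw_def inj_on_def by metis
  ultimately show ?thesis by blast
qed

lemma rkb_yc: "S \<subseteq> {1..n} \<Longrightarrow> rkb S x = yc S x"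
proof -
  assume "S \<subseteq> {1..n}"
  then have "{y \<in> S. y \<le> x} = S \<inter> {1..x}" by auto
  then show ?thesis unfolding rkb_def yc_def by simp
qed

locale mtc =
  fixes n :: nat and Os Cs :: "nat set"
  assumes Osub: "Os \<subseteq> {1..n}" and Csub: "Cs \<subseteq> {1..n}" and disj: "Os \<inter> Cs = {}"
    and ceq: "card Os = card Cs"
    and bal: "\<And>q. q \<le> n \<Longrightarrow> yc Cs q \<le> yc Os q"
    and unc: "\<And>f. f \<in> {1..n} - Os - Cs \<Longrightarrow> yc Os (f - 1) = yc Cs (f - 1)"
begin

lemma finO: "finite Os" using Osub finite_subset by blast
lemma finC: "finite Cs" using Csub finite_subset by blast

lemma mtO: "x \<in> Os \<Longrightarrow> mt Os Cs x \<in> Cs \<and> rkb Cs (mt Os Cs x) = rkb Os x"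
proof -
  assume x: "x \<in> Os"
  have "rkb Os x \<in> {1..card Cs}" using rkb_bij[OF finO] x ceq unfolding bij_betw_def by auto
  then have "\<exists>!c. c \<in> Cs \<and> rkb Cs c = rkb Os x" by (rule rkb_unique[OF finC])
  then have "(THE c. c \<in> Cs \<and> rkb Cs c = rkb Os x) \<in> Cs \<and> rkb Cs (THE c. c \<in> Cs \<and> rkb Cs c = rkb Os x) = rkb Os x"
    by (rule theI')
  then show ?thesis unfolding mt_def using x by simp
qed

lemma mtC: "x \<in> Cs \<Longrightarrow> mt Os Cs x \<in> Os \<and> rkb Os (mt Os Cs x) = rkb Cs x"
proof -
  assume x: "x \<in> Cs"
  have xO: "x \<notin> Os" using x disj by auto
  have "rkb Cs x \<in> {1..card Os}" using rkb_bij[OF finC] x ceq unfolding bij_betw_def by auto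
  then have "\<exists>!c. c \<in> Os \<and> rkb Os c = rkb Cs x" by (rule rkb_unique[OF finO])
  then have "(THE c. c \<in> Os \<and> rkb Os c = rkb Cs x) \<in> Os \<and> rkb Os (THE c. c \<in> Os \<and> rkb Os c = rkb Cs x) = rkb Cs x"
    by (rule theI')
  then show ?thesis unfolding mt_def using x xO by simp
qed

lemma mt_out: "x \<notin> Os \<Longrightarrow> x \<notin> Cs \<Longrightarrow> mt Os Cs x = x"
  unfolding mt_def by simp

lemma rkbO_inj: "x \<in> Os \<Longrightarrow> y \<in> Os \<Longrightarrow> rkb Os x = rkb Os y \<Longrightarrow> x = y"
  using rkb_bij[OF finO] unfolding bij_betw_def inj_on_def by blast
lemma rkbC_inj: "x \<in> Cs \<Longrightarrow> y \<in> Cs \<Longrightarrow> rkb Cs x = rkb Cs y \<Longrightarrow> x = y"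
  using rkb_bij[OF finC] unfolding bij_betw_def inj_on_def by blast

lemma invo: "mt Os Cs (mt Os Cs x) = x"
proof (cases "x \<in> Os")
  case True
  then have c: "mt Os Cs x \<in> Cs" "rkb Cs (mt Os Cs x) = rkb Os x" using mtO by auto
  then have "mt Os Cs (mt Os Cs x) \<in> Os" "rkb Os (mt Os Cs (mt Os Cs x)) = rkb Os x" using mtC[OF c(1)] by auto
  then show ?thesis using rkbO_inj True by blast
next
  case False
  show ?thesis
  proof (cases "x \<in> Cs")
    case True
    then have c: "mt Os Cs x \<in> Os" "rkb Os (mt Os Cs x) = rkb Cs x" using mtC by auto
    then have "mt Os Cs (mt Os Cs x) \<in> Cs" "rkb Cs (mt Os Cs (mt Os Cs x)) = rkb Cs x" using mtO[OF c(1)] by auto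
    then show ?thesis using rkbC_inj True by blast
  next
    case False2: False
    then show ?thesis using False mt_out by simp
  qed
qed

lemma O_less: "x \<in> Os \<Longrightarrow> x < mt Os Cs x"
proof -
  assume x: "x \<in> Os"
  let ?c = "mt Os Cs x"
  have c: "?c \<in> Cs" "rkb Cs ?c = rkb Os x" using mtO[OF x] by auto
  have cn: "?c \<le> n" using c Csub by auto
  show ?thesis
  proof (rule ccontr)
    assume "\<not> x < ?c"
    moreover have "x \<noteq> ?c" using x c disj by auto
    ultimately have cx: "?c < x" by simp
    have "yc Cs ?c \<le> yc Os ?c" using bal[OF cn] .
    moreover have "yc Cs ?c = rkb Os x" using c rkb_yc[OF Csub] by simp
    moreover have "rkb Os ?c < rkb Os x" using rkb_less[OF finO cx x] .
    moreover have "yc Os ?c = rkb Os ?c" using rkb_yc[OF Osub] by simp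
    ultimately show False by simp
  qed
qed

lemma C_less: "x \<in> Cs \<Longrightarrow> mt Os Cs x < x"
proof -
  assume x: "x \<in> Cs"
  have "mt Os Cs x \<in> Os" using mtC[OF x] by simp
  then have "mt Os Cs x < mt Os Cs (mt Os Cs x)" by (rule O_less)
  then show ?thesis using invo by simp
qed

lemma Op_mt: "Op n (mt Os Cs) = Os"
proof (intro equalityI subsetI)
  fix x assume "x \<in> Op n (mt Os Cs)"
  then have x: "x \<in> {1..n}" "x < mt Os Cs x" unfolding Op_def by auto
  show "x \<in> Os"
  proof (rule ccontr)
    assume "x \<notin> Os"
    then show False using x C_less mt_out by (cases "x \<in> Cs") fastforce+
  qed
next
  fix x assume "x \<in> Os" then show "x \<in> Op n (mt Os Cs)" using O_less Osub unfolding Op_def by auto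
qed

lemma Cl_mt: "Cl n (mt Os Cs) = Cs"
proof (intro equalityI subsetI)
  fix x assume "x \<in> Cl n (mt Os Cs)"
  then have x: "x \<in> {1..n}" "mt Os Cs x < x" unfolding Cl_def by auto
  show "x \<in> Cs"
  proof (rule ccontr)
    assume "x \<notin> Cs"
    then show False using x O_less mt_out by (cases "x \<in> Os") fastforce+
  qed
next
  fix x assume "x \<in> Cs" then show "x \<in> Cl n (mt Os Cs)" using C_less Csub unfolding Cl_def by auto
qed

lemma Fx_mt: "Fx n (mt Os Cs) = {1..n} - Os - Cs"
proof (intro equalityI subsetI)
  fix x assume "x \<in> Fx n (mt Os Cs)"
  then have x: "x \<in> {1..n}" "mt Os Cs x = x" unfolding Fx_def by auto
  then show "x \<in> {1..n} - Os - Cs" using O_less C_less by fastforce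
next
  fix x assume "x \<in> {1..n} - Os - Cs" then show "x \<in> Fx n (mt Os Cs)" using mt_out unfolding Fx_def by auto
qed

lemma mt_invl: "invl n (mt Os Cs)"
proof
  show "mt Os Cs permutes {1..n}" unfolding permutes_def
  proof (intro conjI allI impI)
    fix x assume x: "x \<notin> {1..n}"
    then have "x \<notin> Os" "x \<notin> Cs" using Osub Csub by auto
    then show "mt Os Cs x = x" by (rule mt_out)
  next
    fix y show "\<exists>!x. mt Os Cs x = y"
    proof (rule ex1I[of _ "mt Os Cs y"])
      show "mt Os Cs (mt Os Cs y) = y" by (rule invo)
    next
      fix x assume "mt Os Cs x = y" then show "x = mt Os Cs y" using invo by metis
    qed
  qed
next
  fix x show "mt Os Cs (mt Os Cs x) = x" by (rule invo)
next
  fix i j assume i: "i \<in> Op n (mt Os Cs)" and j: "j \<in> Op n (mt Os Cs)" and ij: "i < j"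
  then have iO: "i \<in> Os" and jO: "j \<in> Os" using Op_mt by auto
  have "rkb Os i < rkb Os j" using rkb_less[OF finO ij jO] .
  then have "rkb Cs (mt Os Cs i) < rkb Cs (mt Os Cs j)" using mtO[OF iO] mtO[OF jO] by simp
  moreover have "mt Os Cs i \<in> Cs" "mt Os Cs j \<in> Cs" using mtO iO jO by auto
  ultimately show "mt Os Cs i < mt Os Cs j" using rkb_le_iff[OF finC] by (meson not_le)
next
  fix i f assume i: "i \<in> Op n (mt Os Cs)" and f: "f \<in> Fx n (mt Os Cs)" and l: "i < f" "f < mt Os Cs i"
  then have iO: "i \<in> Os" and f': "f \<in> {1..n} - Os - Cs" using Op_mt Fx_mt by auto
  let ?c = "mt Os Cs i"
  have c: "?c \<in> Cs" "rkb Cs ?c = rkb Os i" using mtO[OF iO] by auto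
  have "yc Os i \<le> yc Os (f - 1)" using l by (intro yc_mono) simp
  moreover have "yc Cs (f - 1) < yc Cs ?c"
  proof -
    have "yc Cs ?c = yc Cs (f - 1) + card (Cs \<inter> {f - 1<..?c})" using l by (intro yc_interval) simp
    moreover have "?c \<in> Cs \<inter> {f - 1<..?c}" using c l by auto
    ultimately show ?thesis by (metis card_gt_0_iff empty_iff finite_Int finite_greaterThanAtMost less_add_same_cancel1)
  qed
  moreover have "yc Os i = yc Cs ?c" using c rkb_yc[OF Osub] rkb_yc[OF Csub] by simp
  ultimately show False using unc[OF f'] by simp
qed

end


context wd begin

lemma mtc_inst: "mtc n OpD ClD"
proof
  show "OpD \<subseteq> {1..n}" unfolding OpD_def by auto
  show "ClD \<subseteq> {1..n}" unfolding ClD_def using Dsub by auto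
  show "OpD \<inter> ClD = {}" unfolding OpD_def ClD_def by auto
  show "card OpD = card ClD" by (rule card_eq)
  show "\<And>q. q \<le> n \<Longrightarrow> yc ClD q \<le> yc OpD q" by (rule ballot)
  fix f assume f: "f \<in> {1..n} - OpD - ClD"
  show "yc OpD (f - 1) = yc ClD (f - 1)"
  proof (cases "f \<in> D")
    case True
    then have "f \<in> RL D" using f unfolding ClD_def by auto
    then show ?thesis by (rule RL_bal)
  next
    case False
    then have "f \<in> RU n D" using f unfolding OpD_def by auto
    then show ?thesis by (rule RU_bal)
  qed
qed

abbreviation "psi \<equiv> mt OpD ClD"

lemma psi_invl: "invl n psi" using mtc.mt_invl[OF mtc_inst] .

lemma Fx_psi: "Fx n psi = RL D \<union> RU n D"
proof -
  have "Fx n psi = {1..n} - OpD - ClD" using mtc.Fx_mt[OF mtc_inst] .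
  also have "\<dots> = RL D \<union> RU n D"
  proof (intro equalityI subsetI)
    fix f assume f: "f \<in> {1..n} - OpD - ClD"
    show "f \<in> RL D \<union> RU n D"
      using f unfolding OpD_def ClD_def by (cases "f \<in> D") auto
  next
    fix f assume f: "f \<in> RL D \<union> RU n D"
    then show "f \<in> {1..n} - OpD - ClD"
      using RL_sub RU_sub Dsub unfolding OpD_def ClD_def by auto
  qed
  finally show ?thesis .
qed

lemma Cl_psi: "Cl n psi = ClD" using mtc.Cl_mt[OF mtc_inst] .

lemma psi_LHS: "psi \<in> LHS a b"
proof -
  interpret I: invl n psi by (rule psi_invl)
  have k: "card ClD \<le> a" using card_RL by simp
  have "psi \<circ> psi = id" using I.invo by (auto simp: fun_eq_iff)
  then have "psi \<in> inv321 n" unfolding inv321_def using I.perm invl_avoids[OF psi_invl] by simp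
  moreover have "fp n psi \<ge> b - a" using fp_Fx I.card_Fx Cl_psi k by simp
  ultimately show ?thesis unfolding LHS_def by simp
qed

lemma psi_Phi: "Phi a n psi = D"
proof -
  interpret I: invl n psi by (rule psi_invl)
  have finF: "finite (Fx n psi)" by (rule I.fins)
  have t: "a - card (Cl n psi) = card (RL D)" using card_RL Cl_psi by simp
  have "Fe a n psi = RL D"
  proof (intro equalityI subsetI)
    fix f assume f: "f \<in> Fe a n psi"
    then have fx: "f \<in> Fx n psi" and r: "rkb (Fx n psi) f \<le> card (RL D)" unfolding Fe_def t by auto
    show "f \<in> RL D"
    proof (rule ccontr)
      assume nf: "f \<notin> RL D"
      then have fu: "f \<in> RU n D" using fx Fx_psi by auto
      have "insert f (RL D) \<subseteq> {g \<in> Fx n psi. g \<le> f}" using fx Fx_psi RL_RU[OF _ fu] by fastforce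
      then have "card (insert f (RL D)) \<le> rkb (Fx n psi) f" unfolding rkb_def using finF by (intro card_mono) auto
      moreover have "card (insert f (RL D)) = Suc (card (RL D))"
        using nf finD RL_sub finite_subset by (metis card_insert_disjoint)
      ultimately show False using r by simp
    qed
  next
    fix f assume f: "f \<in> RL D"
    then have fx: "f \<in> Fx n psi" using Fx_psi by auto
    have "{g \<in> Fx n psi. g \<le> f} \<subseteq> RL D" using Fx_psi RL_RU[OF f] by fastforce
    then have "rkb (Fx n psi) f \<le> card (RL D)" unfolding rkb_def using finD RL_sub finite_subset
      by (metis card_mono)
    then show "f \<in> Fe a n psi" using fx unfolding Fe_def t by simp
  qed
  then have "Phi a n psi = ClD \<union> RL D" unfolding Phi_def using Cl_psi by simp
  also have "ClD \<union> RL D = D" unfolding ClD_def using RL_sub by auto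
  finally show ?thesis .
qed

end

lemma Phi_bij: "a \<le> b \<Longrightarrow> bij_betw (Phi a (a + b)) (LHS a b) (words a b)"
proof -
  assume ab: "a \<le> b"
  have "Phi a (a + b) ` LHS a b = words a b"
  proof (intro equalityI subsetI)
    fix D assume "D \<in> Phi a (a + b) ` LHS a b"
    then show "D \<in> words a b" using Phi_LHS_words[OF ab] by auto
  next
    fix D assume D: "D \<in> words a b"
    interpret W: wd a b D by (unfold_locales) (rule D)
    show "D \<in> Phi a (a + b) ` LHS a b" using W.psi_LHS W.psi_Phi by (metis imageI)
  qed
  then show ?thesis using Phi_LHS_inj unfolding bij_betw_def by simp
qed


theorem mainTheorem12:
  fixes a b :: nat
  assumes "a \<le> b"
  shows "\<exists>\<theta>. bij_betw \<theta> {p \<in> inv321 (a + b). fp (a + b) p \<ge> b - a} (young a b)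
              \<and> (\<forall>p \<in> {p \<in> inv321 (a + b). fp (a + b) p \<ge> b - a}. Des (a + b) p = hookdec (\<theta> p))"
proof -
  have S: "{p \<in> inv321 (a + b). fp (a + b) p \<ge> b - a} = LHS a b" unfolding LHS_def by simp
  define \<theta> where "\<theta> = (\<lambda>(A, B). frob A B) \<circ> (PiW a b \<circ> Phi a (a + b))"
  have "bij_betw (PiW a b \<circ> Phi a (a + b)) (LHS a b) (pairs a b)"
    by (rule bij_betw_trans[OF Phi_bij[OF assms] PiW_bij])
  then have bij: "bij_betw \<theta> (LHS a b) (young a b)"
    unfolding \<theta>_def by (rule bij_betw_trans[OF _ frob_bij])
  have "Des (a + b) p = hookdec (\<theta> p)" if p: "p \<in> LHS a b" for p
  proof -
    have w: "Phi a (a + b) p \<in> words a b" by (rule Phi_LHS_words[OF assms p])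
    have "Des (a + b) p = peaks (a + b) (Phi a (a + b) p)" by (rule LHS_Des[OF p])
    also have "\<dots> = hookdec ((\<lambda>(A, B). frob A B) (PiW a b (Phi a (a + b) p)))"
      by (rule hook_frob_PiW[OF w, symmetric])
    finally show ?thesis unfolding \<theta>_def by simp
  qed
  then show ?thesis unfolding S using bij by blast
qed

end
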